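(* A tournament is unary FA-presentable if and only if it is isomorphic to one obtained by propagating a unary FA-foundational tournament (i.e. a unary FA-foundational binary relation $(Q,\rho)$ in which $(Q,\rho)$ is a tournament).
   Context: A tournament is a structure $(X,\rightarrow)$ with $\rightarrow$ a binary relation such that $x\not\rightarrow x$ for all $x$, and for all distinct $x,y$ exactly one of $x\rightarrow y$, $y\rightarrow x$ holds. A structure is unary FA-presentable if there exist a regular language $L\subseteq a^*$ and a surjection $\phi:L\to X$ such that for equality and for the relation, the set of pairs $(u,v)\in L^2$ whose images are related is regular (the set of words $\mathrm{conv}(u,v)$ over $\{a,\$\}^2$, reading both words in parallel with the shorter padded by $\$$, is a regular language). A unary FA-foundational binary relation is a finite set $Q$ with a relation $\rho$ and pairwise disjoint five-element subsets (seeds) $P_k=\{p^{(k)}_1,\dots,p^{(k)}_5\}$, $0\le k\le n-1$ ($n\ge0$), such that with $Q'=Q\setminus\bigcup_k P_k$, for all $k,l$ (possibly equal) and $q\in Q'$: (1) the statements $p^{(k)}_i\rho p^{(l)}_i$ ($1\le i\le5$) are all true or all false; (2) the statements $p^{(k)}_i\rho p^{(l)}_{i+1}$ ($1\le i\le4$) are all true or all false; (3) the statements $p^{(k)}_{i+1}\rho p^{(l)}_i$ ($1\le i\le 4$) are all true or all false; (4) the statements $p^{(k)}_i\rho p^{(l)}_j$ with $j-i\ge2$ are all true or all false; (5) the statements $p^{(k)}_j\rho p^{(l)}_i$ with $j-i\ge2$ are all true or all false; (6) the statements $q\rho p^{(k)}_i$ ($2\le i\le5$) are all true or all false; (7) the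 statements $p^{(k)}_i\rho q$ ($2\le i\le 5$) are all true or all false. Propagation yields $(\hat Q,\hat\rho)$ with $\hat Q=Q'\cup\{p^{(k)}_i:0\le k<n,\ i\in\mathbb{N}\}$ ($\mathbb{N}=\{1,2,\dots\}$, new elements for $i\ge6$) and: $\hat\rho=\rho$ on $Q'$; $p^{(k)}_i\hat\rho p^{(l)}_j$ iff [$j=i$ and $p^{(k)}_1\rho p^{(l)}_1$] or [$j=i+1$ and $p^{(k)}_1\rho p^{(l)}_2$] or [$j=i-1$ and $p^{(k)}_2\rho p^{(l)}_1$] or [$j\ge i+2$ and $p^{(k)}_1\rho p^{(l)}_3$] or [$j\le i-2$ and $p^{(k)}_3\rho p^{(l)}_1$]; for $q\in Q'$: $q\hat\rho p^{(k)}_1$ iff $q\rho p^{(k)}_1$, $q\hat\rho p^{(k)}_i$ ($i\ge2$) iff $q\rho p^{(k)}_2$, $p^{(k)}_1\hat\rho q$ iff $p^{(k)}_1\rho q$, $p^{(k)}_i\hat\rho q$ ($i\ge2$) iff $p^{(k)}_2\rho q$. *)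

theory Defs
  imports Main
begin

definition regular_lang :: "'b list set \<Rightarrow> bool" where
  "regular_lang L \<longleftrightarrow>
     (\<exists>(S :: nat set) (\<delta> :: nat \<Rightarrow> 'b \<Rightarrow> nat) q0 F.
        finite S \<and> q0 \<in> S \<and> (\<forall>q\<in>S. \<forall>x. \<delta> q x \<in> S) \<and> F \<subseteq> S \<and>
        L = {w. foldl \<delta> q0 w \<in> F})"

text \<open>Padded alphabet letters: SymA is the letter a, SymPad is the padding symbol \$.\<close>
datatype sym = SymA | SymPad

text \<open>Unary words over the one-letter alphabet {a} are lists over unit.
 conv u v reads u and v in parallel, padding the shorter one with \$.\<close>
definition conv :: "unit list \<Rightarrow> unit list \<Rightarrow> (sym \<times> sym) list" where
  "conv u v = map (\<lambda>i. (if i < length u then SymA else SymPad,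
                        if i < length v then SymA else SymPad))
                  [0..<max (length u) (length v)]"

definition tournament :: "'a set \<Rightarrow> ('a \<Rightarrow> 'a \<Rightarrow> bool) \<Rightarrow> bool" where
  "tournament X R \<longleftrightarrow> (\<forall>x\<in>X. \<not> R x x) \<and>
     (\<forall>x\<in>X. \<forall>y\<in>X. x \<noteq> y \<longrightarrow> (R x y \<longleftrightarrow> \<not> R y x))"

definition isomorphic ::
  "'a set \<Rightarrow> ('a \<Rightarrow> 'a \<Rightarrow> bool) \<Rightarrow> 'b set \<Rightarrow> ('b \<Rightarrow> 'b \<Rightarrow> bool) \<Rightarrow> bool" where
  "isomorphic X R Y S \<longleftrightarrow>
     (\<exists>f. bij_betw f X Y \<and> (\<forall>x\<in>X. \<forall>y\<in>X. R x y \<longleftrightarrow> S (f x) (f y)))"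

definition unary_FA_presentable :: "'a set \<Rightarrow> ('a \<Rightarrow> 'a \<Rightarrow> bool) \<Rightarrow> bool" where
  "unary_FA_presentable X R \<longleftrightarrow>
     (\<exists>(L :: unit list set) (\<phi> :: unit list \<Rightarrow> 'a).
        regular_lang L \<and> \<phi> ` L = X \<and>
        regular_lang {conv u v | u v. u \<in> L \<and> v \<in> L \<and> \<phi> u = \<phi> v} \<and>
        regular_lang {conv u v | u v. u \<in> L \<and> v \<in> L \<and> R (\<phi> u) (\<phi> v)})"

text \<open>Seeds: p k i is the element p^{(k)}_i, for k < n and 1 \<le> i \<le> 5.\<close>

definition seed_elems :: "nat \<Rightarrow> (nat \<Rightarrow> nat \<Rightarrow> 'q) \<Rightarrow> 'q set" where
  "seed_elems n p = {p k i | k i. k < n \<and> 1 \<le> i \<and> i \<le> 5}"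

definition unary_FA_foundational ::
  "'q set \<Rightarrow> ('q \<Rightarrow> 'q \<Rightarrow> bool) \<Rightarrow> nat \<Rightarrow> (nat \<Rightarrow> nat \<Rightarrow> 'q) \<Rightarrow> bool" where
  "unary_FA_foundational Q \<rho> n p \<longleftrightarrow>
     finite Q \<and>
     seed_elems n p \<subseteq> Q \<and>
     inj_on (\<lambda>(k, i). p k i) {(k, i). k < n \<and> 1 \<le> i \<and> i \<le> 5} \<and>
     (\<forall>k<n. \<forall>l<n.
        \<comment> \<open>(1)\<close>
        (\<forall>i\<in>{1..5}. \<forall>j\<in>{1..5}. \<rho> (p k i) (p l i) \<longleftrightarrow> \<rho> (p k j) (p l j)) \<and>
        \<comment> \<open>(2)\<close>
        (\<forall>i\<in>{1..4}. \<forall>j\<in>{1..4}. \<rho> (p k i) (p l (i+1)) \<longleftrightarrow> \<rho> (p k j) (p l (j+1))) \<and>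
        \<comment> \<open>(3)\<close>
        (\<forall>i\<in>{1..4}. \<forall>j\<in>{1..4}. \<rho> (p k (i+1)) (p l i) \<longleftrightarrow> \<rho> (p k (j+1)) (p l j)) \<and>
        \<comment> \<open>(4)\<close>
        (\<forall>i\<in>{1..5}. \<forall>j\<in>{1..5}. \<forall>i'\<in>{1..5}. \<forall>j'\<in>{1..5}.
           i + 2 \<le> j \<longrightarrow> i' + 2 \<le> j' \<longrightarrow> (\<rho> (p k i) (p l j) \<longleftrightarrow> \<rho> (p k i') (p l j'))) \<and>
        \<comment> \<open>(5)\<close>
        (\<forall>i\<in>{1..5}. \<forall>j\<in>{1..5}. \<forall>i'\<in>{1..5}. \<forall>j'\<in>{1..5}.
           i + 2 \<le> j \<longrightarrow> i' + 2 \<le> j' \<longrightarrow> (\<rho> (p k j) (p l i) \<longleftrightarrow> \<rho> (p k j') (p l i')))) \<and>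
     (\<forall>k<n. \<forall>q \<in> Q - seed_elems n p.
        \<comment> \<open>(6)\<close>
        (\<forall>i\<in>{2..5}. \<forall>j\<in>{2..5}. \<rho> q (p k i) \<longleftrightarrow> \<rho> q (p k j)) \<and>
        \<comment> \<open>(7)\<close>
        (\<forall>i\<in>{2..5}. \<forall>j\<in>{2..5}. \<rho> (p k i) q \<longleftrightarrow> \<rho> (p k j) q))"

text \<open>Propagation. The element p^{(k)}_i of the propagated structure (k < n, i \<ge> 1) is
 represented by Inr (k, i); elements q of Q' = Q minus the seeds are represented by Inl q.\<close>

definition propagate_carrier ::
  "'q set \<Rightarrow> nat \<Rightarrow> (nat \<Rightarrow> nat \<Rightarrow> 'q) \<Rightarrow> ('q + nat \<times> nat) set" where
  "propagate_carrier Q n p =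
     Inl ` (Q - seed_elems n p) \<union> {Inr (k, i) | k i. k < n \<and> 1 \<le> i}"

fun propagate_rel ::
  "('q \<Rightarrow> 'q \<Rightarrow> bool) \<Rightarrow> (nat \<Rightarrow> nat \<Rightarrow> 'q) \<Rightarrow>
   ('q + nat \<times> nat) \<Rightarrow> ('q + nat \<times> nat) \<Rightarrow> bool" where
  "propagate_rel \<rho> p (Inl q) (Inl q') = \<rho> q q'"
| "propagate_rel \<rho> p (Inr (k, i)) (Inr (l, j)) =
     ((j = i \<and> \<rho> (p k 1) (p l 1)) \<or>
      (j = i + 1 \<and> \<rho> (p k 1) (p l 2)) \<or>
      (j + 1 = i \<and> \<rho> (p k 2) (p l 1)) \<or>
      (i + 2 \<le> j \<and> \<rho> (p k 1) (p l 3)) \<or>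
      (j + 2 \<le> i \<and> \<rho> (p k 3) (p l 1)))"
| "propagate_rel \<rho> p (Inl q) (Inr (k, i)) =
     (if i = 1 then \<rho> q (p k 1) else \<rho> q (p k 2))"
| "propagate_rel \<rho> p (Inr (k, i)) (Inl q) =
     (if i = 1 then \<rho> (p k 1) q else \<rho> (p k 2) q)"

end

theory Submission
  imports Defs
begin


definition alpha :: "nat \<Rightarrow> nat \<Rightarrow> nat \<Rightarrow> nat" where
  "alpha T P x = (if x < T then x else T + (x - T) mod P)"

definition st :: "nat \<Rightarrow> nat \<Rightarrow> nat \<Rightarrow> nat \<Rightarrow> nat \<times> nat \<times> nat \<times> nat" where
  "st T P x y = (if x = y then 0 else if y < x then 1 else 2, alpha T P x, alpha T P y,
                 alpha T P (if x \<le> y then y - x else x - y))"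

lemma conv_rep:
  "conv (replicate x ()) (replicate y ()) =
     replicate (min x y) (SymA,SymA) @ replicate (x - y) (SymA,SymPad) @ replicate (y - x) (SymPad,SymA)"
  by (rule nth_equalityI) (auto simp: conv_def nth_append min_def)

lemma unit_list_rep: "(u :: unit list) = replicate (length u) ()"
  by (rule nth_equalityI) auto

lemma conv_inj:
  assumes "conv u v = conv u' v'"
  shows "u = u' \<and> v = v'"
proof -
  have nth: "\<And>i. i < max (length u) (length v) \<Longrightarrow> conv u v ! i =
     (if i < length u then SymA else SymPad, if i < length v then SymA else SymPad)"
    by (simp add: conv_def)
  have nth': "\<And>i. i < max (length u') (length v') \<Longrightarrow> conv u' v' ! i =
     (if i < length u' then SymA else SymPad, if i < length v' then SymA else SymPad)"
    by (simp add: conv_def)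
  have len: "max (length u) (length v) = max (length u') (length v')"
    using arg_cong[OF assms, of length] by (simp add: conv_def)
  have "length u = length u'"
  proof (rule ccontr)
    assume "length u \<noteq> length u'"
    then consider "length u < length u'" | "length u' < length u" by linarith
    then show False
    proof cases
      case 1
      then have "length u < max (length u) (length v)" using len by linarith
      then show False using nth[of "length u"] nth'[of "length u"] assms 1 len by auto
    next
      case 2
      then have "length u' < max (length u) (length v)" using len by linarith
      then show False using nth[of "length u'"] nth'[of "length u'"] assms 2 len by auto
    qed
  qed
  moreover have "length v = length v'"
  proof (rule ccontr)
    assume "length v \<noteq> length v'"
    then consider "length v < length v'" | "length v' < length v" by linarith
    then show False
    proof cases
      case 1
      then have "length v < max (length u) (length v)" using len by linarith
      then show False using nth[of "length v"] nth'[of "length v"] assms 1 len by auto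
    next
      case 2
      then have "length v' < max (length u) (length v)" using len by linarith
      then show False using nth[of "length v'"] nth'[of "length v'"] assms 2 len by auto
    qed
  qed
  ultimately show ?thesis using unit_list_rep[of u] unit_list_rep[of u'] unit_list_rep[of v] unit_list_rep[of v']
    by metis
qed

lemma regular_gen:
  fixes S :: "'c set" and \<delta> :: "'c \<Rightarrow> 'b \<Rightarrow> 'c"
  assumes "finite S" "q0 \<in> S" "\<forall>q\<in>S. \<forall>x. \<delta> q x \<in> S" "F \<subseteq> S"
  shows "regular_lang {w. foldl \<delta> q0 w \<in> F}"
proof -
  obtain f :: "'c \<Rightarrow> nat" where f: "inj_on f S"
    using assms(1) finite_imp_inj_to_nat_seg by blast
  define g where "g = inv_into S f"
  define \<delta>' where "\<delta>' = (\<lambda>n x. f (\<delta> (g n) x))"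
  have gf: "\<And>q. q \<in> S \<Longrightarrow> g (f q) = q" using f by (simp add: g_def)
  have run: "\<And>q. q \<in> S \<Longrightarrow> foldl \<delta>' (f q) w = f (foldl \<delta> q w) \<and> foldl \<delta> q w \<in> S" for w
  proof (induction w)
    case Nil then show ?case by simp
  next
    case (Cons a w)
    then show ?case using assms(3) by (simp add: \<delta>'_def gf)
  qed
  have "{w. foldl \<delta> q0 w \<in> F} = {w. foldl \<delta>' (f q0) w \<in> f ` F}"
  proof (rule Collect_cong)
    fix w
    have "foldl \<delta> q0 w \<in> S" using run assms(2) by blast
    then show "(foldl \<delta> q0 w \<in> F) = (foldl \<delta>' (f q0) w \<in> f ` F)"
      using run[OF assms(2), of w] f assms(4) by (auto dest: inj_onD)
  qed
  moreover have "\<forall>q\<in>f ` S. \<forall>x. \<delta>' q x \<in> f ` S"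
    using assms(3) gf by (auto simp: \<delta>'_def)
  ultimately show ?thesis unfolding regular_lang_def
    using assms by (intro exI[of _ "f ` S"] exI[of _ \<delta>'] exI[of _ "f q0"] exI[of _ "f ` F"]) auto
qed


definition sig :: "nat \<Rightarrow> nat \<Rightarrow> nat \<Rightarrow> nat" where
  "sig T P a = (if Suc a < T + P then Suc a else T)"

lemma alpha_0[simp]: "alpha T P 0 = 0"
  by (simp add: alpha_def)

lemma alpha_lt: "0 < P \<Longrightarrow> alpha T P x < T + P"
  by (simp add: alpha_def)

lemma alpha_Suc: assumes "0 < P" shows "alpha T P (Suc x) = sig T P (alpha T P x)"
proof (cases "Suc x < T")
  case True then show ?thesis by (simp add: alpha_def sig_def)
next
  case False
  show ?thesis
  proof (cases "x < T")
    case True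
    then have "x = T - 1" "T > 0" using False by auto
    then show ?thesis using assms False by (auto simp: alpha_def sig_def)
  next
    case f2: False
    then have e: "Suc x - T = Suc (x - T)" by simp
    show ?thesis using assms False f2 mod_less_divisor[OF assms, of "x - T"] unfolding alpha_def sig_def e
      by (auto simp: mod_Suc)
  qed
qed

lemma sig_lt: "0 < P \<Longrightarrow> a < T + P \<Longrightarrow> sig T P a < T + P"
  by (simp add: sig_def)

lemma st_ge: "st T P (y + d) y = (if d = 0 then 0 else 1, alpha T P (y+d), alpha T P y, alpha T P d)"
  by (auto simp: st_def)

lemma st_le: "st T P y (y + d) = (if d = 0 then 0 else 2, alpha T P y, alpha T P (y+d), alpha T P d)"
  by (auto simp: st_def)

definition dstep :: "nat \<Rightarrow> nat \<Rightarrow> nat \<times> nat \<times> nat \<times> nat \<Rightarrow> sym \<times> sym \<Rightarrow> nat \<times> nat \<times> nat \<times> nat" where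
  "dstep T P s c = (case s of (ph, a, b, d) \<Rightarrow>
     (case c of
        (SymA, SymA) \<Rightarrow> if ph = 0 then (0, sig T P a, sig T P b, 0) else (3,0,0,0)
      | (SymA, SymPad) \<Rightarrow> if ph = 0 \<or> ph = 1 then (1, sig T P a, b, sig T P d) else (3,0,0,0)
      | (SymPad, SymA) \<Rightarrow> if ph = 0 \<or> ph = 2 then (2, a, sig T P b, sig T P d) else (3,0,0,0)
      | (SymPad, SymPad) \<Rightarrow> (3,0,0,0)))"

abbreviation cw :: "nat \<Rightarrow> nat \<Rightarrow> (sym \<times> sym) list" where
  "cw x y \<equiv> conv (replicate x ()) (replicate y ())"

lemma rep_snoc: "replicate (Suc n) x = replicate n x @ [x]"
  by (simp add: replicate_append_same)

lemma foldl_rep_Suc: "foldl f s (replicate (Suc m) c) = f (foldl f s (replicate m c)) c"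
  by (simp only: rep_snoc foldl_append foldl.simps)

lemma run_AA: assumes "0 < P"
  shows "foldl (dstep T P) (0,0,0,0) (replicate m (SymA,SymA)) = st T P m m"
proof (induction m)
  case 0 then show ?case by (simp add: st_def)
next
  case (Suc m)
  show ?case unfolding foldl_rep_Suc Suc using assms by (simp add: dstep_def st_def alpha_Suc)
qed

lemma run_AP: assumes "0 < P"
  shows "foldl (dstep T P) (st T P y y) (replicate d (SymA,SymPad)) = st T P (y + d) y"
proof (induction d)
  case 0 then show ?case by simp
next
  case (Suc d)
  have "st T P (y + Suc d) y = (1, alpha T P (Suc (y+d)), alpha T P y, alpha T P (Suc d))"
    using st_ge[of T P y "Suc d"] by simp
  show ?case unfolding foldl_rep_Suc Suc st_ge using assms by (simp add: dstep_def alpha_Suc)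
qed

lemma run_PA: assumes "0 < P"
  shows "foldl (dstep T P) (st T P y y) (replicate d (SymPad,SymA)) = st T P y (y + d)"
proof (induction d)
  case 0 then show ?case by simp
next
  case (Suc d)
  have "st T P y (y + Suc d) = (2, alpha T P y, alpha T P (Suc (y+d)), alpha T P (Suc d))"
    using st_le[of T P y "Suc d"] by simp
  show ?case unfolding foldl_rep_Suc Suc st_le using assms by (simp add: dstep_def alpha_Suc)
qed

lemma run_cw: assumes "0 < P"
  shows "foldl (dstep T P) (0,0,0,0) (cw x y) = st T P x y"
proof (cases "x \<le> y")
  case True
  then obtain d where y: "y = x + d" using le_Suc_ex by blast
  show ?thesis unfolding conv_rep y using run_AA[OF assms, of T x] run_PA[OF assms, of T x d]
    by simp
next
  case False
  then obtain d where x: "x = y + d" by (metis le_Suc_ex nat_le_linear)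
  show ?thesis unfolding conv_rep x using run_AA[OF assms, of T y] run_AP[OF assms, of T y d]
    by simp
qed

lemma cw_snoc_AA: "cw (Suc x) (Suc x) = cw x x @ [(SymA,SymA)]"
  unfolding conv_rep by (simp add: replicate_append_same)
lemma cw_snoc_AP: "y \<le> x \<Longrightarrow> cw (Suc x) y = cw x y @ [(SymA,SymPad)]"
  unfolding conv_rep by (simp add: replicate_append_same Suc_diff_le min_def)
lemma cw_snoc_PA: "x \<le> y \<Longrightarrow> cw x (Suc y) = cw x y @ [(SymPad,SymA)]"
  unfolding conv_rep by (simp add: replicate_append_same Suc_diff_le min_def)


lemma run_reach: assumes "0 < P"
  shows "foldl (dstep T P) (0,0,0,0) w = (3,0,0,0) \<or> (\<exists>x y. w = cw x y)"
proof (induction w rule: rev_induct)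
  case Nil
  then show ?case by (intro disjI2 exI[of _ 0]) (simp add: conv_def)
next
  case (snoc c w)
  have fs: "foldl (dstep T P) (0,0,0,0) (w @ [c]) = dstep T P (foldl (dstep T P) (0,0,0,0) w) c"
    by simp
  show ?case
  proof (cases "foldl (dstep T P) (0,0,0,0) w = (3,0,0,0)")
    case True
    show ?thesis unfolding fs True by (auto simp: dstep_def split: sym.splits prod.splits)
  next
    case False
    then obtain x y where w: "w = cw x y" using snoc by blast
    then have s: "foldl (dstep T P) (0,0,0,0) w = st T P x y" using run_cw[OF assms] by simp
    obtain c1 c2 where c: "c = (c1, c2)" by fastforce
    have cs: "c = (SymA,SymA) \<or> c = (SymA,SymPad) \<or> c = (SymPad,SymA) \<or> c = (SymPad,SymPad)"
      by (cases c1; cases c2) (simp_all add: c)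
    have dead: "dstep T P (st T P x y) c = (3,0,0,0) \<Longrightarrow> ?thesis"
      unfolding fs s by simp
    consider "x = y" | "y < x" | "x < y" by linarith
    then show ?thesis
    proof cases
      case 1
      from cs show ?thesis
      proof (elim disjE)
        assume "c = (SymA,SymA)" then show ?thesis using w 1 cw_snoc_AA[of x] by metis
      next
        assume "c = (SymA,SymPad)" then show ?thesis using w 1 cw_snoc_AP[of x x] by (metis order_refl)
      next
        assume "c = (SymPad,SymA)" then show ?thesis using w 1 cw_snoc_PA[of x x] by (metis order_refl)
      next
        assume "c = (SymPad,SymPad)" then show ?thesis by (intro dead) (simp add: dstep_def st_def)
      qed
    next
      case 2
      from cs show ?thesis
      proof (elim disjE)
        assume "c = (SymA,SymA)" then show ?thesis using 2 by (intro dead) (simp add: dstep_def st_def)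
      next
        assume "c = (SymA,SymPad)" then show ?thesis using w 2 cw_snoc_AP[of y x] by (metis less_imp_le)
      next
        assume "c = (SymPad,SymA)" then show ?thesis using 2 by (intro dead) (simp add: dstep_def st_def)
      next
        assume "c = (SymPad,SymPad)" then show ?thesis by (intro dead) (simp add: dstep_def st_def)
      qed
    next
      case 3
      from cs show ?thesis
      proof (elim disjE)
        assume "c = (SymA,SymA)" then show ?thesis using 3 by (intro dead) (simp add: dstep_def st_def)
      next
        assume "c = (SymA,SymPad)" then show ?thesis using 3 by (intro dead) (simp add: dstep_def st_def)
      next
        assume "c = (SymPad,SymA)" then show ?thesis using w 3 cw_snoc_PA[of x y] by (metis less_imp_le)
      next
        assume "c = (SymPad,SymPad)" then show ?thesis by (intro dead) (simp add: dstep_def st_def)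
      qed
    qed
  qed
qed


lemma reg_conv:
  assumes P: "0 < P" and inv: "\<And>x y x' y'. st T P x y = st T P x' y' \<Longrightarrow> G x y \<Longrightarrow> G x' y'"
  shows "regular_lang {conv u v | u v. G (length u) (length v)}"
proof -
  define Sts where "Sts = {0..(3::nat)} \<times> {..<T+P} \<times> {..<T+P} \<times> {..<T+P}"
  define F where "F = {s. \<exists>x y. st T P x y = s \<and> G x y}"
  have stS: "st T P x y \<in> Sts" for x y
    using alpha_lt[OF P] by (auto simp: Sts_def st_def)
  have "{w. foldl (dstep T P) (0,0,0,0) w \<in> F} = {conv u v | u v. G (length u) (length v)}"
  proof (intro set_eqI iffI)
    fix w assume "w \<in> {w. foldl (dstep T P) (0,0,0,0) w \<in> F}"
    then have wF: "foldl (dstep T P) (0,0,0,0) w \<in> F" by simp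
    then have "foldl (dstep T P) (0,0,0,0) w \<noteq> (3,0,0,0)" by (auto simp: F_def st_def split: if_splits)
    then obtain x y where w: "w = cw x y" using run_reach[OF P] by blast
    then obtain x' y' where "st T P x' y' = st T P x y" "G x' y'"
      using wF run_cw[OF P] by (auto simp: F_def)
    then have "G x y" using inv by blast
    then show "w \<in> {conv u v | u v. G (length u) (length v)}" using w by fastforce
  next
    fix w assume "w \<in> {conv u v | u v. G (length u) (length v)}"
    then obtain u v where w: "w = conv u v" "G (length u) (length v)" by blast
    then have "w = cw (length u) (length v)" using unit_list_rep by metis
    then show "w \<in> {w. foldl (dstep T P) (0,0,0,0) w \<in> F}"
      using run_cw[OF P] w by (auto simp: F_def)
  qed
  moreover have "regular_lang {w. foldl (dstep T P) (0,0,0,0) w \<in> F}"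
  proof (rule regular_gen)
    show "finite Sts" by (simp add: Sts_def)
    show "(0,0,0,0) \<in> Sts" using P by (simp add: Sts_def)
    show "\<forall>q\<in>Sts. \<forall>x. dstep T P q x \<in> Sts"
      using P sig_lt[OF P] by (auto simp: Sts_def dstep_def split: sym.splits)
    show "F \<subseteq> Sts" unfolding F_def using stS by blast
  qed
  ultimately show ?thesis by simp
qed


lemma reg_unary:
  assumes P: "0 < P" and inv: "\<And>x x'. alpha T P x = alpha T P x' \<Longrightarrow> x \<in> A \<Longrightarrow> x' \<in> A"
  shows "regular_lang {w :: unit list. length w \<in> A}"
proof -
  define F where "F = alpha T P ` A"
  define d where "d = (\<lambda>a (_::unit). sig T P a)"
  have run: "foldl d 0 w = alpha T P (length w)" for w
  proof (induction w rule: rev_induct)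
    case Nil then show ?case by simp
  next
    case (snoc x xs) then show ?case by (simp add: d_def alpha_Suc[OF P])
  qed
  have "{w :: unit list. length w \<in> A} = {w. foldl d 0 w \<in> F}"
  proof (intro Collect_cong)
    fix w :: "unit list"
    show "(length w \<in> A) = (foldl d 0 w \<in> F)"
    proof
      assume "length w \<in> A" then show "foldl d 0 w \<in> F" unfolding run F_def by (rule imageI)
    next
      assume "foldl d 0 w \<in> F"
      then obtain x where "x \<in> A" "alpha T P (length w) = alpha T P x" unfolding run F_def by auto
      then show "length w \<in> A" using inv[of x "length w"] by simp
    qed
  qed
  moreover have "regular_lang {w. foldl d 0 w \<in> F}"
  proof (rule regular_gen[where S="{..<T+P}"])
    show "\<forall>q\<in>{..<T + P}. \<forall>x. d q x \<in> {..<T + P}" using sig_lt[OF P] by (simp add: d_def)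
    show "F \<subseteq> {..<T + P}" using alpha_lt[OF P] by (auto simp: F_def)
  qed (use P in auto)
  ultimately show ?thesis by simp
qed


definition per :: "(nat \<Rightarrow> 'c) \<Rightarrow> nat \<Rightarrow> nat \<Rightarrow> bool" where
  "per f T p \<longleftrightarrow> (\<forall>m\<ge>T. f (m + p) = f m)"

lemma ev_periodic:
  assumes "finite C" "c \<in> C" "\<forall>x\<in>C. G x \<in> C"
  shows "\<exists>T p. 0 < p \<and> per (\<lambda>m. (G^^m) c) T p"
proof -
  define f where "f = (\<lambda>m. (G^^m) c)"
  have fC: "f m \<in> C" for m by (induction m) (use assms in \<open>auto simp: f_def\<close>)
  have "\<not> inj_on f {0..card C}"
  proof
    assume "inj_on f {0..card C}"
    moreover have "f ` {0..card C} \<subseteq> C" using fC by auto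
    ultimately have "card {0..card C} \<le> card C" using card_inj_on_le assms(1) by blast
    then show False by simp
  qed
  then obtain i j where ij: "i \<noteq> j" "f i = f j" unfolding inj_on_def by blast
  have "\<exists>i j. i < j \<and> f i = f j"
    using ij by (metis linorder_neqE_nat)
  then obtain i j where ij: "i < j" "f i = f j" by blast
  have "per f i (j - i)"
    unfolding per_def
  proof (intro allI impI)
    fix m assume "i \<le> m"
    have e: "m + (j - i) = (m - i) + j" using ij \<open>i \<le> m\<close> by simp
    have "f (m + (j - i)) = (G^^(m - i)) (f j)"
      unfolding e f_def by (simp add: funpow_add)
    also have "\<dots> = (G^^(m - i)) (f i)" using ij by simp
    also have "\<dots> = (G^^((m - i) + i)) c" by (simp add: f_def funpow_add)
    also have "\<dots> = f m" using \<open>i \<le> m\<close> by (simp add: f_def)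
    finally show "f (m + (j - i)) = f m" .
  qed
  then show ?thesis using ij unfolding f_def by (intro exI[of _ i] exI[of _ "j - i"]) auto
qed

lemma per_mult: "per f T p \<Longrightarrow> T \<le> m \<Longrightarrow> f (m + k * p) = f m"
proof (induction k)
  case 0 then show ?case by simp
next
  case (Suc k)
  have "f (m + Suc k * p) = f ((m + k * p) + p)" by (simp add: algebra_simps)
  also have "\<dots> = f (m + k * p)" using Suc.prems unfolding per_def by simp
  finally show ?case using Suc by simp
qed

lemma per_mono: assumes "per f T0 p0" "T0 \<le> T" "p0 dvd p" shows "per f T p"
  unfolding per_def
proof (intro allI impI)
  fix m assume "T \<le> m"
  obtain k where "p = k * p0" using assms(3) by (metis dvd_def mult.commute)
  then show "f (m + p) = f m" using per_mult[OF assms(1)] \<open>T \<le> m\<close> assms(2) by simp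
qed

lemma alpha_lowD: "alpha T p x = alpha T p y \<Longrightarrow> x < T \<Longrightarrow> y = x"
  by (auto simp: alpha_def split: if_splits)

lemma alpha_per: assumes "per f T p" "alpha T p x = alpha T p y" shows "f x = f y"
proof (cases "x < T")
  case True then show ?thesis using alpha_lowD assms(2) by metis
next
  case False
  then have yT: "\<not> y < T" using alpha_lowD assms(2) by metis
  have "f x = f (T + (x - T) mod p)"
    using per_mult[OF assms(1), of "T + (x - T) mod p" "(x - T) div p"] False
    by (simp add: add.assoc)
  also have "\<dots> = f (T + (y - T) mod p)" using assms(2) False yT by (simp add: alpha_def)
  also have "\<dots> = f y"
    using per_mult[OF assms(1), of "T + (y - T) mod p" "(y - T) div p"] yT
    by (simp add: add.assoc)
  finally show ?thesis .
qed

lemma foldl_replicate: "foldl \<delta> q (replicate m c) = ((\<lambda>q. \<delta> q c)^^m) q"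
  by (induction m arbitrary: q) (simp_all add: funpow_Suc_right del: funpow.simps)

lemma funpow_in: "q \<in> S \<Longrightarrow> \<forall>q\<in>S. g q \<in> S \<Longrightarrow> (g^^m) q \<in> S"
  by (induction m) auto

lemma ev_periodic_all:
  fixes S :: "nat set" and g :: "nat \<Rightarrow> nat"
  assumes S: "finite S" and cl: "\<forall>q\<in>S. g q \<in> S"
  shows "\<exists>T p. 0 < p \<and> per (\<lambda>m. (\<lambda>q. if q \<in> S then (g^^m) q else 0)) T p"
proof -
  define C where "C = {f. \<forall>q. (q \<in> S \<longrightarrow> f q \<in> S) \<and> (q \<notin> S \<longrightarrow> f q = 0)}"
  define G where "G = (\<lambda>h q. if q \<in> S then g (h q) else (0::nat))"
  define h0 where "h0 = (\<lambda>q::nat. if q \<in> S then q else 0)"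
  have fin: "finite C" unfolding C_def by (rule finite_set_of_finite_funs[OF S S])
  have eq: "(G^^m) h0 = (\<lambda>q. if q \<in> S then (g^^m) q else 0)" for m
    by (induction m) (auto simp: G_def h0_def)
  have "\<exists>T p. 0 < p \<and> per (\<lambda>m. (G^^m) h0) T p"
    by (rule ev_periodic[OF fin]) (use cl in \<open>auto simp: C_def G_def h0_def\<close>)
  then show ?thesis unfolding eq .
qed

lemma per_all_apply:
  assumes "per (\<lambda>m. (\<lambda>q. if q \<in> S then (g^^m) q else 0)) T p" "alpha T p x = alpha T p y" "q \<in> S"
  shows "(g^^x) q = (g^^y) q"
  using alpha_per[OF assms(1,2)] assms(3) by (metis (mono_tags, lifting))

lemma dfa_conv_inv:
  assumes "regular_lang K"
  shows "\<exists>T0 p0. 0 < p0 \<and> (\<forall>T p. T0 \<le> T \<longrightarrow> p0 dvd p \<longrightarrow>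
     (\<forall>x y x' y'. st T p x y = st T p x' y' \<longrightarrow> (cw x y \<in> K \<longleftrightarrow> cw x' y' \<in> K)))"
proof -
  obtain S :: "nat set" and \<delta> q0 F where A: "finite S" "q0 \<in> S" "\<forall>q\<in>S. \<forall>x. \<delta> q x \<in> S" "F \<subseteq> S"
    "K = {w. foldl \<delta> q0 w \<in> F}"
    using assms unfolding regular_lang_def by blast
  define g1 where "g1 = (\<lambda>q. \<delta> q (SymA,SymA))"
  define g2 where "g2 = (\<lambda>q. \<delta> q (SymA,SymPad))"
  define g3 where "g3 = (\<lambda>q. \<delta> q (SymPad,SymA))"
  have c1: "\<forall>q\<in>S. g1 q \<in> S" "\<forall>q\<in>S. g2 q \<in> S" "\<forall>q\<in>S. g3 q \<in> S"
    using A(3) by (auto simp: g1_def g2_def g3_def)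
  obtain T1 p1 where P1: "0 < p1" "per (\<lambda>m. (g1^^m) q0) T1 p1"
    using ev_periodic[OF A(1) A(2) c1(1)] by blast
  obtain T2 p2 where P2: "0 < p2" "per (\<lambda>m. (\<lambda>q. if q \<in> S then (g2^^m) q else 0)) T2 p2"
    using ev_periodic_all[OF A(1) c1(2)] by blast
  obtain T3 p3 where P3: "0 < p3" "per (\<lambda>m. (\<lambda>q. if q \<in> S then (g3^^m) q else 0)) T3 p3"
    using ev_periodic_all[OF A(1) c1(3)] by blast
  have run: "foldl \<delta> q0 (cw x y) = (if x \<le> y then (g3^^(y - x)) ((g1^^x) q0) else (g2^^(x - y)) ((g1^^y) q0))" for x y
    unfolding conv_rep by (simp add: foldl_replicate g1_def g2_def g3_def min_def)
  show ?thesis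
  proof (rule exI[of _ "max T1 (max T2 T3)"], rule exI[of _ "p1 * p2 * p3"], intro conjI allI impI)
    show "0 < p1 * p2 * p3" using P1 P2 P3 by simp
    fix T p x y x' y'
    assume T: "max T1 (max T2 T3) \<le> T" and p: "p1 * p2 * p3 dvd p" and e: "st T p x y = st T p x' y'"
    have d1: "p1 dvd p" by (rule dvd_trans[OF _ p]) simp
    have d2: "p2 dvd p" by (rule dvd_trans[OF _ p]) simp
    have d3: "p3 dvd p" by (rule dvd_trans[OF _ p]) simp
    have Q1: "per (\<lambda>m. (g1^^m) q0) T p"
      by (rule per_mono[OF P1(2)]) (use T d1 in auto)
    have Q2: "per (\<lambda>m. (\<lambda>q. if q \<in> S then (g2^^m) q else 0)) T p"
      by (rule per_mono[OF P2(2)]) (use T d2 in auto)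
    have Q3: "per (\<lambda>m. (\<lambda>q. if q \<in> S then (g3^^m) q else 0)) T p"
      by (rule per_mono[OF P3(2)]) (use T d3 in auto)
    have ax: "alpha T p x = alpha T p x'" and ay: "alpha T p y = alpha T p y'"
      and ad: "alpha T p (if x \<le> y then y - x else x - y) = alpha T p (if x' \<le> y' then y' - x' else x' - y')"
      and ph: "(if x = y then 0 else if y < x then 1 else 2::nat) = (if x' = y' then 0 else if y' < x' then 1 else 2)"
      using e by (simp_all add: st_def)
    have s1: "(g1^^x) q0 = (g1^^x') q0" using alpha_per[OF Q1 ax] .
    have s2: "(g1^^y) q0 = (g1^^y') q0" using alpha_per[OF Q1 ay] .
    have inS: "(g1^^m) q0 \<in> S" for m using funpow_in[OF A(2) c1(1)] .
    have "foldl \<delta> q0 (cw x y) = foldl \<delta> q0 (cw x' y')"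
    proof (cases "x \<le> y")
      case True
      then have True': "x' \<le> y'" using ph by (auto split: if_splits)
      have "(g3^^(y - x)) ((g1^^x) q0) = (g3^^(y' - x')) ((g1^^x') q0)"
        using per_all_apply[OF Q3, of "y - x" "y' - x'" "(g1^^x') q0"] ad True True' s1 inS by simp
      then show ?thesis using True True' by (simp add: run)
    next
      case False
      then have False': "\<not> x' \<le> y'" using ph by (auto split: if_splits)
      have "(g2^^(x - y)) ((g1^^y) q0) = (g2^^(x' - y')) ((g1^^y') q0)"
        using per_all_apply[OF Q2, of "x - y" "x' - y'" "(g1^^y') q0"] ad False False' s2 inS by simp
      then show ?thesis using False False' by (simp add: run)
    qed
    then show "(cw x y \<in> K) = (cw x' y' \<in> K)" using A(5) by simp
  qed
qed

lemma dfa_unary_inv: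
  assumes "regular_lang (K :: unit list set)"
  shows "\<exists>T0 p0. 0 < p0 \<and> (\<forall>T p. T0 \<le> T \<longrightarrow> p0 dvd p \<longrightarrow>
     (\<forall>x x'. alpha T p x = alpha T p x' \<longrightarrow> (replicate x () \<in> K \<longleftrightarrow> replicate x' () \<in> K)))"
proof -
  obtain S :: "nat set" and \<delta> q0 F where A: "finite S" "q0 \<in> S" "\<forall>q\<in>S. \<forall>x. \<delta> q x \<in> S" "F \<subseteq> S"
    "K = {w. foldl \<delta> q0 w \<in> F}"
    using assms unfolding regular_lang_def by blast
  define g1 where "g1 = (\<lambda>q. \<delta> q ())"
  have c1: "\<forall>q\<in>S. g1 q \<in> S" using A(3) by (auto simp: g1_def)
  obtain T1 p1 where P1: "0 < p1" "per (\<lambda>m. (g1^^m) q0) T1 p1"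
    using ev_periodic[OF A(1) A(2) c1] by blast
  show ?thesis
  proof (rule exI[of _ T1], rule exI[of _ p1], intro conjI allI impI)
    show "0 < p1" by fact
    fix T p x x' assume "T1 \<le> T" "p1 dvd p" "alpha T p x = alpha T p x'"
    then have "(g1^^x) q0 = (g1^^x') q0" using alpha_per[OF per_mono[OF P1(2)]] by blast
    then show "(replicate x () \<in> K) = (replicate x' () \<in> K)"
      using A(5) by (simp add: foldl_replicate g1_def)
  qed
qed


lemma st_parts:
  assumes "st T P x y = st T P x' y'"
  shows "alpha T P x = alpha T P x'" "alpha T P y = alpha T P y'" "x = y \<longleftrightarrow> x' = y'"
    "x < y \<longleftrightarrow> x' < y'" "y < x \<longleftrightarrow> y' < x'"
    "alpha T P (if x \<le> y then y - x else x - y) = alpha T P (if x' \<le> y' then y' - x' else x' - y')"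
  using assms by (auto simp: st_def split: if_splits)

lemma alpha3:
  assumes "0 < N" "alpha (3*N) N x = alpha (3*N) N x'"
  shows "x mod N = x' mod N" "x < 3*N \<Longrightarrow> x' = x" "x < 3*N \<longleftrightarrow> x' < 3*N"
proof -
  show "x < 3*N \<Longrightarrow> x' = x" using alpha_lowD assms(2) by blast
  show "x < 3*N \<longleftrightarrow> x' < 3*N" using alpha_lowD assms(2) by metis
  show "x mod N = x' mod N"
  proof (cases "x < 3*N")
    case True then show ?thesis using alpha_lowD assms(2) by metis
  next
    case False
    then have F': "\<not> x' < 3*N" using alpha_lowD assms(2) by metis
    have "(x - 3*N) mod N = (x' - 3*N) mod N" using assms(2) False F' by (simp add: alpha_def)
    moreover have "x mod N = (x - 3*N) mod N"
      using mod_mult_self1[of "x - 3*N" 3 N] False by simp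
    moreover have "x' mod N = (x' - 3*N) mod N"
      using mod_mult_self1[of "x' - 3*N" 3 N] F' by simp
    ultimately show ?thesis by simp
  qed
qed

definition clamp :: "int \<Rightarrow> int" where "clamp z = max (-2) (min 2 z)"

lemma prel_Inr:
  "propagate_rel \<rho> p (Inr (k, i)) (Inr (l, j)) =
     ((clamp (int j - int i) = 0 \<and> \<rho> (p k 1) (p l 1)) \<or>
      (clamp (int j - int i) = 1 \<and> \<rho> (p k 1) (p l 2)) \<or>
      (clamp (int j - int i) = -1 \<and> \<rho> (p k 2) (p l 1)) \<or>
      (clamp (int j - int i) = 2 \<and> \<rho> (p k 1) (p l 3)) \<or>
      (clamp (int j - int i) = -2 \<and> \<rho> (p k 3) (p l 1)))"
proof -
  have "j = i \<longleftrightarrow> clamp (int j - int i) = 0" by (simp add: clamp_def; arith)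
  moreover have "j = i + 1 \<longleftrightarrow> clamp (int j - int i) = 1" by (simp add: clamp_def; arith)
  moreover have "j + 1 = i \<longleftrightarrow> clamp (int j - int i) = -1" by (simp add: clamp_def; arith)
  moreover have "i + 2 \<le> j \<longleftrightarrow> clamp (int j - int i) = 2" by (simp add: clamp_def; arith)
  moreover have "j + 2 \<le> i \<longleftrightarrow> clamp (int j - int i) = -2" by (simp add: clamp_def; arith)
  ultimately show ?thesis by simp
qed

lemma prel_class:
  "clamp (int j - int i) = clamp (int j' - int i') \<Longrightarrow>
   propagate_rel \<rho> p (Inr (k, i)) (Inr (l, j)) = propagate_rel \<rho> p (Inr (k, i')) (Inr (l, j'))"
  unfolding prel_Inr by simp


definition lenL :: "nat \<Rightarrow> nat \<Rightarrow> nat \<Rightarrow> nat set" where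
  "lenL m n N = {x. x < m \<or> (N \<le> x \<and> x mod N < n)}"

definition dec :: "'q list \<Rightarrow> nat \<Rightarrow> nat \<Rightarrow> 'q + nat \<times> nat" where
  "dec qs N x = (if x < N then Inl (qs ! x) else Inr (x mod N, x div N))"

lemma lenL_inv:
  assumes N: "m < N" "0 < N" and a: "alpha (3*N) N x = alpha (3*N) N x'" and x: "x \<in> lenL m n N"
  shows "x' \<in> lenL m n N"
proof (cases "x < 3*N")
  case True
  then have "x' = x" using alpha3(2)[OF N(2) a] by blast
  then show ?thesis using x by simp
next
  case False
  have "x mod N = x' mod N" using alpha3(1)[OF N(2) a] .
  moreover have "\<not> x' < 3*N" using alpha3(3)[OF N(2) a] False by blast
  ultimately show ?thesis using x False N unfolding lenL_def by auto
qed

lemma sign_lemma: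
  fixes N D z a b :: int
  assumes "0 < N" "\<bar>D\<bar> > 2" "z = N * D + a - b" "0 \<le> a" "a < N" "0 \<le> b" "b < N"
  shows "D > 0 \<longleftrightarrow> z > 0"
proof (cases "D > 0")
  case True
  then have "D \<ge> 3" using assms(2) by simp
  then have "N * D \<ge> N * 3" using assms(1) by (intro mult_left_mono) auto
  then show ?thesis using True assms by linarith
next
  case False
  then have "D \<le> -3" using assms(2) by simp
  then have "N * D \<le> N * (-3)" using assms(1) by (intro mult_left_mono) auto
  then show ?thesis using False assms by linarith
qed

lemma int_dm: "int x = int N * int (x div N) + int (x mod N)"
  by (metis mult_div_mod_eq of_nat_add of_nat_mult)

lemma clamp_big: "\<bar>D\<bar> > 2 \<Longrightarrow> clamp D = (if D > 0 then 2 else -2)"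
  by (auto simp: clamp_def)

lemma diff_class:
  fixes N :: nat
  assumes N: "0 < N" and xN: "N \<le> x" "N \<le> y" "N \<le> x'" "N \<le> y'"
    and e: "st (3*N) N x y = st (3*N) N x' y'"
  shows "clamp (int (y div N) - int (x div N)) = clamp (int (y' div N) - int (x' div N))"
proof -
  note sp = st_parts[OF e]
  have mx: "x mod N = x' mod N" and my: "y mod N = y' mod N"
    using alpha3(1)[OF N sp(1)] alpha3(1)[OF N sp(2)] by auto
  define D where "D = int (y div N) - int (x div N)"
  define D' where "D' = int (y' div N) - int (x' div N)"
  have ex: "int x = int N * int (x div N) + int (x mod N)" by (rule int_dm)
  have ey: "int y = int N * int (y div N) + int (y mod N)" by (rule int_dm)
  have ex': "int x' = int N * int (x' div N) + int (x' mod N)" by (rule int_dm)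
  have ey': "int y' = int N * int (y' div N) + int (y' mod N)" by (rule int_dm)
  have bx: "int (x mod N) < int N" "int (y mod N) < int N" using N by auto
  have diff: "int y - int x = int N * D + int (y mod N) - int (x mod N)"
    unfolding D_def using ex ey by (simp add: algebra_simps)
  have diff': "int y' - int x' = int N * D' + int (y mod N) - int (x mod N)"
    unfolding D'_def using ex' ey' mx my by (simp add: algebra_simps)
  define d where "d = (if x \<le> y then y - x else x - y)"
  define d' where "d' = (if x' \<le> y' then y' - x' else x' - y')"
  have ad: "alpha (3*N) N d = alpha (3*N) N d'" using sp(6) unfolding d_def d'_def .
  have le: "x \<le> y \<longleftrightarrow> x' \<le> y'" using sp(5) by (simp add: not_less[symmetric])
  show ?thesis
  proof (cases "d < 3*N")
    case True
    then have "d' = d" using alpha3(2)[OF N ad] by simp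
    then have "int y - int x = int y' - int x'" using le unfolding d_def d'_def
      by (auto split: if_splits)
    then have "int N * D = int N * D'" using diff diff' by simp
    then have "D = D'" using N by simp
    then show ?thesis unfolding D_def D'_def by simp
  next
    case False
    then have F': "\<not> d' < 3*N" using alpha3(3)[OF N ad] by simp
    have big: "\<bar>int N * D\<bar> > 2 * int N" if "\<not> d < 3*N" and diffD: "int y - int x = int N * D + int (y mod N) - int (x mod N)"
      and dd: "d = (if x \<le> y then y - x else x - y)" for x y d D
    proof -
      have "\<bar>int y - int x\<bar> \<ge> 3 * int N" using that by (auto split: if_splits)
      moreover have "int (y mod N) < int N" "int (x mod N) < int N" using N by auto
      ultimately show ?thesis using diffD by linarith
    qed
    have b1: "\<bar>int N * D\<bar> > 2 * int N" using big[OF False diff d_def] .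
    have diff'': "int y' - int x' = int N * D' + int (y' mod N) - int (x' mod N)" using diff' mx my by simp
    have b2: "\<bar>int N * D'\<bar> > 2 * int N" using big[OF F' diff'' d'_def] .
    have aD: "\<bar>D\<bar> > 2" using b1 N by (simp add: abs_mult)
    have aD': "\<bar>D'\<bar> > 2" using b2 N by (simp add: abs_mult)
    have sgn: "D > 0 \<longleftrightarrow> D' > 0"
    proof -
      have "D > 0 \<longleftrightarrow> int y - int x > 0"
        by (rule sign_lemma[OF _ aD diff]) (use N in auto)
      moreover have "D' > 0 \<longleftrightarrow> int y' - int x' > 0"
        by (rule sign_lemma[OF _ aD' diff'']) (use N in auto)
      ultimately show ?thesis using le sp(3) by linarith
    qed
    show ?thesis unfolding D_def[symmetric] D'_def[symmetric] clamp_big[OF aD] clamp_big[OF aD'] using sgn by simp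
  qed
qed


lemma div_one_iff: "0 < (N::nat) \<Longrightarrow> N \<le> y \<Longrightarrow> (y div N = 1 \<longleftrightarrow> y < 2 * N)"
proof
  assume a: "0 < N" "N \<le> y" "y div N = 1"
  have "y mod N < N" using a(1) by simp
  then show "y < 2 * N" using mult_div_mod_eq[of N y] a(3) by simp
next
  assume "0 < N" "N \<le> y" "y < 2 * N"
  then show "y div N = 1" by (intro div_nat_eqI) auto
qed

lemma enc_inv:
  assumes N: "m < N" "n < N" and xs: "x \<in> lenL m n N" "y \<in> lenL m n N" "x' \<in> lenL m n N" "y' \<in> lenL m n N"
    and e: "st (3*N) N x y = st (3*N) N x' y'"
  shows "propagate_rel \<rho> p (dec qs N x) (dec qs N y) = propagate_rel \<rho> p (dec qs N x') (dec qs N y')"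
proof -
  have N0: "0 < N" using N by simp
  note sp = st_parts[OF e]
  have lx: "x < 3*N \<Longrightarrow> x' = x" "x' < 3*N \<Longrightarrow> x = x'"
    using alpha3(2)[OF N0 sp(1)] alpha3(2)[OF N0 sp(1)[symmetric]] by auto
  have ly: "y < 3*N \<Longrightarrow> y' = y" "y' < 3*N \<Longrightarrow> y = y'"
    using alpha3(2)[OF N0 sp(2)] alpha3(2)[OF N0 sp(2)[symmetric]] by auto
  have mx: "x mod N = x' mod N" and my: "y mod N = y' mod N"
    using alpha3(1)[OF N0 sp(1)] alpha3(1)[OF N0 sp(2)] by auto
  have cx: "x < N \<longleftrightarrow> x' < N" using lx by fastforce
  have cy: "y < N \<longleftrightarrow> y' < N" using ly by fastforce
  have jy: "y div N = 1 \<longleftrightarrow> y' div N = 1" if "N \<le> y" "N \<le> y'"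
    using div_one_iff[OF N0 that(1)] div_one_iff[OF N0 that(2)] ly by fastforce
  have jx: "x div N = 1 \<longleftrightarrow> x' div N = 1" if "N \<le> x" "N \<le> x'"
    using div_one_iff[OF N0 that(1)] div_one_iff[OF N0 that(2)] lx by fastforce
  consider "x < N" "y < N" | "x < N" "\<not> y < N" | "\<not> x < N" "y < N" | "\<not> x < N" "\<not> y < N" by blast
  then show ?thesis
  proof cases
    case 1 then show ?thesis using lx ly by simp
  next
    case 2
    then have "x' = x" "\<not> y' < N" using lx cy by auto
    then show ?thesis using 2 jy my by (simp add: dec_def)
  next
    case 3
    then have "y' = y" "\<not> x' < N" using ly cx by auto
    then show ?thesis using 3 jx mx by (simp add: dec_def)
  next
    case 4
    then have "\<not> x' < N" "\<not> y' < N" using cx cy by auto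
    then have ce: "clamp (int (y div N) - int (x div N)) = clamp (int (y' div N) - int (x' div N))"
      using diff_class[OF N0 _ _ _ _ e] 4 by simp
    have d1: "dec qs N x = Inr (x mod N, x div N)" using 4 unfolding dec_def by simp
    have d2: "dec qs N y = Inr (y mod N, y div N)" using 4 unfolding dec_def by simp
    have d3: "dec qs N x' = Inr (x mod N, x' div N)"
      using \<open>\<not> x' < N\<close> unfolding dec_def mx by simp
    have d4: "dec qs N y' = Inr (y mod N, y' div N)"
      using \<open>\<not> y' < N\<close> unfolding dec_def my by simp
    show ?thesis unfolding d1 d2 d3 d4 by (rule prel_class[OF ce])
  qed
qed

lemma conv_set_cong:
  "(\<And>u v. P u v \<longleftrightarrow> G (length u) (length v)) \<Longrightarrow>
   {conv u v | u v. P u v} = {conv u v | u v. G (length u) (length v)}"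
  by simp

lemma backward:
  fixes X :: "'a set" and Q :: "'q set"
  assumes found: "unary_FA_foundational Q \<rho> n p"
    and iso: "isomorphic X R (propagate_carrier Q n p) (propagate_rel \<rho> p)"
  shows "unary_FA_presentable X R"
proof -
  define C where "C = propagate_carrier Q n p"
  obtain f where f: "bij_betw f X C" and rel: "\<forall>x\<in>X. \<forall>y\<in>X. R x y \<longleftrightarrow> propagate_rel \<rho> p (f x) (f y)"
    using iso unfolding isomorphic_def C_def by blast
  have finQ: "finite (Q - seed_elems n p)" using found unfolding unary_FA_foundational_def by auto
  obtain qs where qs: "set qs = Q - seed_elems n p" "distinct qs" using finite_distinct_list[OF finQ] by blast
  define m where "m = length qs"
  define N where "N = m + n + 1"
  have N: "m < N" "n < N" "0 < N" by (auto simp: N_def)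
  define Ls where "Ls = lenL m n N"
  define g where "g = inv_into X f"
  have g: "bij_betw g C X" using f by (simp add: g_def bij_betw_inv_into)
  have fg: "\<And>c. c \<in> C \<Longrightarrow> f (g c) = c" using f by (simp add: g_def bij_betw_inv_into_right)
  have gf: "\<And>z. z \<in> X \<Longrightarrow> g (f z) = z" using f by (simp add: g_def bij_betw_inv_into_left)
  have dec_in: "dec qs N x \<in> C" if "x \<in> Ls" for x
  proof (cases "x < N")
    case True
    then have "x < m" using that by (auto simp: Ls_def lenL_def)
    then show ?thesis using True qs(1) by (auto simp: dec_def C_def propagate_carrier_def m_def)
  next
    case False
    have "x mod N < n" using that N False by (auto simp: Ls_def lenL_def)
    moreover have "0 < x div N" using False N(3) by (simp add: div_greater_zero_iff)
    ultimately have "x mod N < n" "1 \<le> x div N" by auto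
    then show ?thesis using False by (auto simp: dec_def C_def propagate_carrier_def)
  qed
  have dec_inj: "inj_on (dec qs N) Ls"
  proof (rule inj_onI)
    fix x y assume xy: "x \<in> Ls" "y \<in> Ls" "dec qs N x = dec qs N y"
    consider "x < N" "y < N" | "\<not> x < N" "\<not> y < N" | "x < N" "\<not> y < N" | "\<not> x < N" "y < N" by blast
    then show "x = y"
    proof cases
      case 1
      then have "x < m" "y < m" using xy by (auto simp: Ls_def lenL_def)
      then show ?thesis using 1 xy qs(2) by (simp add: dec_def m_def nth_eq_iff_index_eq)
    next
      case 2
      then have "x mod N = y mod N" "x div N = y div N" using xy by (auto simp: dec_def)
      then show ?thesis by (metis mult_div_mod_eq)
    qed (use xy in \<open>auto simp: dec_def\<close>)
  qed
  have dec_surj: "\<exists>x\<in>Ls. dec qs N x = c" if "c \<in> C" for c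
  proof -
    from that consider q where "c = Inl q" "q \<in> Q - seed_elems n p"
      | k i where "c = Inr (k, i)" "k < n" "1 \<le> i"
      by (auto simp: C_def propagate_carrier_def)
    then show ?thesis
    proof cases
      case 1
      then obtain x where "x < m" "qs ! x = q" using qs(1) by (metis in_set_conv_nth m_def)
      then show ?thesis using 1 N by (intro bexI[of _ x]) (auto simp: dec_def Ls_def lenL_def)
    next
      case 2
      define x where "x = i * N + k"
      have xm: "x mod N = k" and xd: "x div N = i" using 2 N unfolding x_def by auto
      have xN: "N \<le> x" unfolding x_def using mult_le_mono1[OF 2(3), of N] by (simp only: mult_1)
      have "x \<in> Ls" unfolding Ls_def lenL_def using xm xN 2(2) by simp
      moreover have "dec qs N x = c" unfolding dec_def using xm xd xN 2(1) by simp
      ultimately show ?thesis by blast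
    qed
  qed
  define \<phi> where "\<phi> = (\<lambda>w :: unit list. g (dec qs N (length w)))"
  define L where "L = {w :: unit list. length w \<in> Ls}"
  have regL: "regular_lang L"
    unfolding L_def
  proof (rule reg_unary[of N "3*N"])
    fix x x' assume "alpha (3*N) N x = alpha (3*N) N x'" "x \<in> Ls"
    then show "x' \<in> Ls" unfolding Ls_def using lenL_inv[OF N(1) N(3)] by blast
  qed (use N in simp)
  have imgL: "\<phi> ` L = X"
  proof
    show "\<phi> ` L \<subseteq> X" using dec_in g by (auto simp: \<phi>_def L_def bij_betw_def)
    show "X \<subseteq> \<phi> ` L"
    proof
      fix z assume z: "z \<in> X"
      then have "f z \<in> C" using f by (auto simp: bij_betw_def)
      then obtain x where x: "x \<in> Ls" "dec qs N x = f z" using dec_surj by blast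
      then have "\<phi> (replicate x ()) = z" using gf z by (simp add: \<phi>_def)
      moreover have "replicate x () \<in> L" using x by (simp add: L_def)
      ultimately show "z \<in> \<phi> ` L" by (metis image_eqI)
    qed
  qed
  have ginj: "inj_on g C" using g by (simp add: bij_betw_def)
  have eqlang: "{conv u v | u v. u \<in> L \<and> v \<in> L \<and> \<phi> u = \<phi> v} =
      {conv u v | u v. (\<lambda>a b. a \<in> Ls \<and> b \<in> Ls \<and> a = b) (length u) (length v)}"
  proof (rule conv_set_cong)
    fix u v :: "unit list"
    show "(u \<in> L \<and> v \<in> L \<and> \<phi> u = \<phi> v) = (length u \<in> Ls \<and> length v \<in> Ls \<and> length u = length v)"
      using ginj dec_inj dec_in unfolding L_def \<phi>_def by (auto dest: inj_onD)
  qed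
  have relang: "{conv u v | u v. u \<in> L \<and> v \<in> L \<and> R (\<phi> u) (\<phi> v)} =
      {conv u v | u v. (\<lambda>a b. a \<in> Ls \<and> b \<in> Ls \<and> propagate_rel \<rho> p (dec qs N a) (dec qs N b)) (length u) (length v)}"
  proof (rule conv_set_cong)
    fix u v :: "unit list"
    have "R (\<phi> u) (\<phi> v) = propagate_rel \<rho> p (dec qs N (length u)) (dec qs N (length v))"
      if "length u \<in> Ls" "length v \<in> Ls"
      using rel dec_in[OF that(1)] dec_in[OF that(2)] g fg unfolding \<phi>_def bij_betw_def by auto
    then show "(u \<in> L \<and> v \<in> L \<and> R (\<phi> u) (\<phi> v)) =
      (length u \<in> Ls \<and> length v \<in> Ls \<and> propagate_rel \<rho> p (dec qs N (length u)) (dec qs N (length v)))"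
      unfolding L_def by auto
  qed
  have regE: "regular_lang {conv u v | u v. u \<in> L \<and> v \<in> L \<and> \<phi> u = \<phi> v}"
    unfolding eqlang
  proof (rule reg_conv[of N "3*N"])
    fix x y x' y' assume e: "st (3*N) N x y = st (3*N) N x' y'" and G: "x \<in> Ls \<and> y \<in> Ls \<and> x = y"
    show "x' \<in> Ls \<and> y' \<in> Ls \<and> x' = y'"
      using lenL_inv[OF N(1) N(3) st_parts(1)[OF e]] lenL_inv[OF N(1) N(3) st_parts(2)[OF e]] st_parts(3)[OF e] G
      by (auto simp: Ls_def)
  qed (use N in auto)
  have regR: "regular_lang {conv u v | u v. u \<in> L \<and> v \<in> L \<and> R (\<phi> u) (\<phi> v)}"
    unfolding relang
  proof (rule reg_conv[of N "3*N"])
    fix x y x' y' assume e: "st (3*N) N x y = st (3*N) N x' y'"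
      and G: "x \<in> Ls \<and> y \<in> Ls \<and> propagate_rel \<rho> p (dec qs N x) (dec qs N y)"
    have "x' \<in> Ls" "y' \<in> Ls"
      using lenL_inv[OF N(1) N(3) st_parts(1)[OF e]] lenL_inv[OF N(1) N(3) st_parts(2)[OF e]] G
      by (auto simp: Ls_def)
    then show "x' \<in> Ls \<and> y' \<in> Ls \<and> propagate_rel \<rho> p (dec qs N x') (dec qs N y')"
      using enc_inv[OF N(1) N(2) _ _ _ _ e, of \<rho> p qs] G by (auto simp: Ls_def)
  qed (use N in auto)
  show ?thesis unfolding unary_FA_presentable_def
    using regL imgL regE regR by blast
qed


lemma alpha_addP: "T \<le> c \<Longrightarrow> alpha T P (c + k * P) = alpha T P c"
proof -
  assume "T \<le> c"
  then have e: "c + k * P - T = (c - T) + k * P" by simp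
  have m: "(c + k * P - T) mod P = (c - T) mod P" unfolding e by simp
  show ?thesis using \<open>T \<le> c\<close> m by (simp add: alpha_def)
qed

lemma st_shift: "T \<le> x \<Longrightarrow> T \<le> y \<Longrightarrow> st T P (x + k * P) (y + k * P) = st T P x y"
  unfolding st_def using alpha_addP[of T x P k] alpha_addP[of T y P k] by auto

lemma st_farm:
  assumes "T \<le> y" "x < y + m * P" "x + T \<le> y + m * P" "m \<le> t"
  shows "st T P x (y + t * P) = st T P x (y + m * P)"
proof -
  define d2 where "d2 = y + m * P - x"
  have d2T: "T \<le> d2" "0 < d2" using assms unfolding d2_def by auto
  have tm: "t * P = m * P + (t - m) * P" using assms(4) by (metis add_mult_distrib le_add_diff_inverse)
  have e1: "y + t * P = x + (d2 + (t - m) * P)"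
    using assms(2) unfolding d2_def tm by simp
  have e2: "y + m * P = x + d2" using assms(2) unfolding d2_def by simp
  have a1: "alpha T P (y + t * P) = alpha T P (y + m * P)"
  proof -
    have "alpha T P (y + t * P) = alpha T P y" by (rule alpha_addP[OF assms(1)])
    also have "\<dots> = alpha T P (y + m * P)" by (rule alpha_addP[OF assms(1), symmetric])
    finally show ?thesis .
  qed
  have a2: "alpha T P (d2 + (t - m) * P) = alpha T P d2" by (rule alpha_addP[OF d2T(1)])
  have "st T P x (y + t * P) = (2, alpha T P x, alpha T P (y + t * P), alpha T P (d2 + (t - m) * P))"
    unfolding e1 st_le using d2T by simp
  also have "\<dots> = (2, alpha T P x, alpha T P (y + m * P), alpha T P d2)" using a1 a2 by simp
  also have "\<dots> = st T P x (y + m * P)" unfolding e2 st_le using d2T e2 by simp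
  finally show ?thesis .
qed

lemma st_far:
  assumes "T \<le> y" "x < y + P" "T \<le> P" "2 \<le> t"
  shows "st T P x (y + t * P) = st T P x (y + 2 * P)"
  by (rule st_farm) (use assms in auto)

lemma st_swap: "st T P x y = (case st T P y x of (ph, a, b, d) \<Rightarrow> (if ph = 0 then 0 else 3 - ph, b, a, d))"
  by (auto simp: st_def)

lemma st_far':
  assumes "T \<le> y" "x < y + P" "T \<le> P" "2 \<le> t"
  shows "st T P (y + t * P) x = st T P (y + 2 * P) x"
  by (subst st_swap, subst (2) st_swap, simp only: st_far[OF assms])

lemma st_farm':
  assumes "T \<le> y" "x < y + m * P" "x + T \<le> y + m * P" "m \<le> t"
  shows "st T P (y + t * P) x = st T P (y + m * P) x"
  by (subst st_swap, subst (2) st_swap, simp only: st_farm[OF assms])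

definition sd :: "nat \<Rightarrow> nat \<Rightarrow> nat \<Rightarrow> nat \<Rightarrow> nat" where
  "sd B P r i = B + r + (i - 1) * P"

context
  fixes T P B :: nat
  assumes TP: "T \<le> P" and TB: "T \<le> B"
begin

lemma C0: "1 \<le> i \<Longrightarrow> st T P (sd B P r i) (sd B P s i) = st T P (sd B P r 1) (sd B P s 1)"
  using st_shift[of T "B + r" "B + s" P "i - 1"] TB unfolding sd_def by simp

lemma C1: assumes "1 \<le> i" shows "st T P (sd B P r i) (sd B P s (i + 1)) = st T P (sd B P r 1) (sd B P s 2)"
proof -
  obtain a where a: "i = Suc a" using assms by (cases i) auto
  show ?thesis using st_shift[of T "B + r" "B + s + P" P a] TB unfolding sd_def a by (simp add: algebra_simps)
qed

lemma Cm1: assumes "1 \<le> i" shows "st T P (sd B P r (i + 1)) (sd B P s i) = st T P (sd B P r 2) (sd B P s 1)"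
proof -
  obtain a where a: "i = Suc a" using assms by (cases i) auto
  show ?thesis using st_shift[of T "B + r + P" "B + s" P a] TB unfolding sd_def a by (simp add: algebra_simps)
qed

lemma C2:
  assumes "1 \<le> i" "i + 2 \<le> j" "r < P"
  shows "st T P (sd B P r i) (sd B P s j) = st T P (sd B P r 1) (sd B P s 3)"
proof -
  obtain a where a: "i = Suc a" using assms by (cases i) auto
  obtain t where t: "j = i + t" "2 \<le> t" using assms(2) by (intro that[of "j - i"]) auto
  have "st T P (sd B P r i) (sd B P s j) = st T P (B + r + a * P) (B + s + t * P + a * P)"
    unfolding sd_def t a by (simp add: algebra_simps)
  also have "\<dots> = st T P (B + r) (B + s + t * P)"
    by (rule st_shift) (use TB in auto)
  also have "\<dots> = st T P (B + r) (B + s + 2 * P)"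
    by (rule st_far) (use TB TP assms t in auto)
  also have "\<dots> = st T P (sd B P r 1) (sd B P s 3)" unfolding sd_def by simp
  finally show ?thesis .
qed

lemma Cm2:
  assumes "1 \<le> j" "j + 2 \<le> i" "s < P"
  shows "st T P (sd B P r i) (sd B P s j) = st T P (sd B P r 3) (sd B P s 1)"
proof -
  obtain a where a: "j = Suc a" using assms by (cases j) auto
  obtain t where t: "i = j + t" "2 \<le> t" using assms(2) by (intro that[of "i - j"]) auto
  have "st T P (sd B P r i) (sd B P s j) = st T P (B + r + t * P + a * P) (B + s + a * P)"
    unfolding sd_def t a by (simp add: algebra_simps)
  also have "\<dots> = st T P (B + r + t * P) (B + s)"
    by (rule st_shift) (use TB in auto)
  also have "\<dots> = st T P (B + r + 2 * P) (B + s)"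
    by (rule st_far') (use TB TP assms t in auto)
  also have "\<dots> = st T P (sd B P r 3) (sd B P s 1)" unfolding sd_def by simp
  finally show ?thesis .
qed

lemma CQ:
  assumes "2 \<le> i" "q < B"
  shows "st T P q (sd B P r i) = st T P q (sd B P r 2)"
  unfolding sd_def by (rule st_farm) (use assms TB TP in auto)

lemma CQ':
  assumes "2 \<le> i" "q < B"
  shows "st T P (sd B P r i) q = st T P (sd B P r 2) q"
  unfolding sd_def by (rule st_farm') (use assms TB TP in auto)

end


lemma cw_mem: "cw x y \<in> {conv u v | u v. P u v} \<longleftrightarrow> P (replicate x ()) (replicate y ())"
proof
  assume "cw x y \<in> {conv u v | u v. P u v}"
  then obtain u v where "cw x y = conv u v" "P u v" by blast
  then show "P (replicate x ()) (replicate y ())" using conv_inj by metis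
qed blast

lemma iso_from:
  assumes e: "bij_betw e C A" and psi: "bij_betw \<psi> A X"
    and rel: "\<And>a b. a \<in> C \<Longrightarrow> b \<in> C \<Longrightarrow> S a b \<longleftrightarrow> R (\<psi> (e a)) (\<psi> (e b))"
  shows "isomorphic X R C S"
proof -
  define h where "h = \<psi> \<circ> e"
  have h: "bij_betw h C X" unfolding h_def using bij_betw_trans[OF e psi] .
  define f where "f = inv_into C h"
  have f: "bij_betw f X C" unfolding f_def by (rule bij_betw_inv_into[OF h])
  have hf: "\<And>x. x \<in> X \<Longrightarrow> h (f x) = x" unfolding f_def using h by (simp add: bij_betw_inv_into_right)
  have fC: "\<And>x. x \<in> X \<Longrightarrow> f x \<in> C" using f by (auto simp: bij_betw_def)
  show ?thesis unfolding isomorphic_def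
  proof (intro exI[of _ f] conjI ballI)
    show "bij_betw f X C" by fact
    fix x y assume xy: "x \<in> X" "y \<in> X"
    have "R x y = R (h (f x)) (h (f y))" using hf xy by simp
    also have "\<dots> = S (f x) (f y)" using rel[OF fC[OF xy(1)] fC[OF xy(2)]] by (simp add: h_def)
    finally show "R x y = S (f x) (f y)" .
  qed
qed


lemma dfa_unary_inv':
  assumes "regular_lang (K :: unit list set)"
  obtains T0 p0 where "0 < p0" "\<And>T p x x'. T0 \<le> T \<Longrightarrow> p0 dvd p \<Longrightarrow> alpha T p x = alpha T p x' \<Longrightarrow>
     (replicate x () \<in> K \<longleftrightarrow> replicate x' () \<in> K)"
proof -
  obtain T0 where "\<exists>p0. 0 < p0 \<and> (\<forall>T p. T0 \<le> T \<longrightarrow> p0 dvd p \<longrightarrow>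
     (\<forall>x x'. alpha T p x = alpha T p x' \<longrightarrow> (replicate x () \<in> K \<longleftrightarrow> replicate x' () \<in> K)))"
    using dfa_unary_inv[OF assms] ..
  then obtain p0 where h: "0 < p0" "\<forall>T p. T0 \<le> T \<longrightarrow> p0 dvd p \<longrightarrow>
     (\<forall>x x'. alpha T p x = alpha T p x' \<longrightarrow> (replicate x () \<in> K \<longleftrightarrow> replicate x' () \<in> K))"
    by (elim exE conjE)
  show thesis
  proof (rule that[of p0 T0])
    show "0 < p0" by (rule h(1))
    fix T p x x' assume "T0 \<le> T" "p0 dvd p" "alpha T p x = alpha T p x'"
    then show "(replicate x () \<in> K) = (replicate x' () \<in> K)" by (rule h(2)[rule_format])
  qed
qed

lemma dfa_conv_inv':
  assumes "regular_lang K"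
  obtains T0 p0 where "0 < p0" "\<And>T p x y x' y'. T0 \<le> T \<Longrightarrow> p0 dvd p \<Longrightarrow> st T p x y = st T p x' y' \<Longrightarrow>
     (cw x y \<in> K \<longleftrightarrow> cw x' y' \<in> K)"
proof -
  obtain T0 where "\<exists>p0. 0 < p0 \<and> (\<forall>T p. T0 \<le> T \<longrightarrow> p0 dvd p \<longrightarrow>
     (\<forall>x y x' y'. st T p x y = st T p x' y' \<longrightarrow> (cw x y \<in> K \<longleftrightarrow> cw x' y' \<in> K)))"
    using dfa_conv_inv[OF assms] ..
  then obtain p0 where h: "0 < p0" "\<forall>T p. T0 \<le> T \<longrightarrow> p0 dvd p \<longrightarrow>
     (\<forall>x y x' y'. st T p x y = st T p x' y' \<longrightarrow> (cw x y \<in> K \<longleftrightarrow> cw x' y' \<in> K))"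
    by (elim exE conjE)
  show thesis
  proof (rule that[of p0 T0])
    show "0 < p0" by (rule h(1))
    fix T p x y x' y' assume "T0 \<le> T" "p0 dvd p" "st T p x y = st T p x' y'"
    then show "(cw x y \<in> K) = (cw x' y' \<in> K)" by (rule h(2)[rule_format])
  qed
qed

lemma forward:
  fixes X :: "'a set" and R :: "'a \<Rightarrow> 'a \<Rightarrow> bool"
  assumes tour: "tournament X R" and pres: "unary_FA_presentable X R"
  shows "\<exists>(Q :: nat set) (\<rho> :: nat \<Rightarrow> nat \<Rightarrow> bool) (n :: nat) (p :: nat \<Rightarrow> nat \<Rightarrow> nat).
        unary_FA_foundational Q \<rho> n p \<and> tournament Q \<rho> \<and>
        isomorphic X R (propagate_carrier Q n p) (propagate_rel \<rho> p)"
proof -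
  obtain L :: "unit list set" and \<phi> :: "unit list \<Rightarrow> 'a" where
    L: "regular_lang L" "\<phi> ` L = X" and
    E: "regular_lang {conv u v | u v. u \<in> L \<and> v \<in> L \<and> \<phi> u = \<phi> v}" and
    Rg: "regular_lang {conv u v | u v. u \<in> L \<and> v \<in> L \<and> R (\<phi> u) (\<phi> v)}"
    using pres unfolding unary_FA_presentable_def by blast
  define Ls where "Ls = {x. replicate x () \<in> L}"
  define \<psi> where "\<psi> = (\<lambda>x. \<phi> (replicate x ()))"
  obtain TL where "\<exists>pL. 0 < pL \<and> (\<forall>T p. TL \<le> T \<longrightarrow> pL dvd p \<longrightarrow>
     (\<forall>x x'. alpha T p x = alpha T p x' \<longrightarrow> (replicate x () \<in> L \<longleftrightarrow> replicate x' () \<in> L)))"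
    using dfa_unary_inv[OF L(1)] ..
  then obtain pL where PL: "0 < pL" "\<forall>T p. TL \<le> T \<longrightarrow> pL dvd p \<longrightarrow>
     (\<forall>x x'. alpha T p x = alpha T p x' \<longrightarrow> (replicate x () \<in> L \<longleftrightarrow> replicate x' () \<in> L))"
    by (elim exE conjE)
  define KE where "KE = {conv u v | u v. u \<in> L \<and> v \<in> L \<and> \<phi> u = \<phi> v}"
  define KR where "KR = {conv u v | u v. u \<in> L \<and> v \<in> L \<and> R (\<phi> u) (\<phi> v)}"
  obtain TE where "\<exists>pE. 0 < pE \<and> (\<forall>T p. TE \<le> T \<longrightarrow> pE dvd p \<longrightarrow>
     (\<forall>x y x' y'. st T p x y = st T p x' y' \<longrightarrow> (cw x y \<in> KE \<longleftrightarrow> cw x' y' \<in> KE)))"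
    using dfa_conv_inv[OF E[folded KE_def]] ..
  then obtain pE where PE: "0 < pE" "\<forall>T p. TE \<le> T \<longrightarrow> pE dvd p \<longrightarrow>
     (\<forall>x y x' y'. st T p x y = st T p x' y' \<longrightarrow> (cw x y \<in> KE \<longleftrightarrow> cw x' y' \<in> KE))"
    by (elim exE conjE)
  obtain TR where "\<exists>pR. 0 < pR \<and> (\<forall>T p. TR \<le> T \<longrightarrow> pR dvd p \<longrightarrow>
     (\<forall>x y x' y'. st T p x y = st T p x' y' \<longrightarrow> (cw x y \<in> KR \<longleftrightarrow> cw x' y' \<in> KR)))"
    using dfa_conv_inv[OF Rg[folded KR_def]] ..
  then obtain pR where PR: "0 < pR" "\<forall>T p. TR \<le> T \<longrightarrow> pR dvd p \<longrightarrow>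
     (\<forall>x y x' y'. st T p x y = st T p x' y' \<longrightarrow> (cw x y \<in> KR \<longleftrightarrow> cw x' y' \<in> KR))"
    by (elim exE conjE)
  define Tm where "Tm = max TL (max TE TR)"
  define P where "P = pL * pE * pR * (Tm + 1)"
  define B where "B = 2 * Tm + P"
  have P0: "0 < P" using PL PE PR by (simp add: P_def)
  have TmP: "Tm < P"
  proof -
    have "1 \<le> pL * pE * pR" using PL PE PR by simp
    then have "1 * (Tm + 1) \<le> pL * pE * pR * (Tm + 1)" by (rule mult_le_mono1)
    then show ?thesis by (simp add: P_def)
  qed
  have TmB: "Tm \<le> B" by (simp add: B_def)
  have dL: "pL dvd P" and dE: "pE dvd P" and dR: "pR dvd P" by (simp_all add: P_def)
  have IL: "alpha Tm P x = alpha Tm P x' \<Longrightarrow> x \<in> Ls \<longleftrightarrow> x' \<in> Ls" for x x'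
    unfolding Ls_def mem_Collect_eq by (rule PL(2)[rule_format]) (auto simp: Tm_def dL)
  have IE0: "st Tm P x y = st Tm P x' y' \<Longrightarrow> (cw x y \<in> KE \<longleftrightarrow> cw x' y' \<in> KE)" for x y x' y'
    by (rule PE(2)[rule_format]) (auto simp: Tm_def dE)
  have IR0: "st Tm P x y = st Tm P x' y' \<Longrightarrow> (cw x y \<in> KR \<longleftrightarrow> cw x' y' \<in> KR)" for x y x' y'
    by (rule PR(2)[rule_format]) (auto simp: Tm_def dR)
  have cwE: "cw x y \<in> KE \<longleftrightarrow> (x \<in> Ls \<and> y \<in> Ls \<and> \<psi> x = \<psi> y)" for x y
    unfolding KE_def cw_mem Ls_def \<psi>_def by simp
  have cwR: "cw x y \<in> KR \<longleftrightarrow> (x \<in> Ls \<and> y \<in> Ls \<and> R (\<psi> x) (\<psi> y))" for x y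
    unfolding KR_def cw_mem Ls_def \<psi>_def by simp
  have IE: "st Tm P x y = st Tm P x' y' \<Longrightarrow>
      (x \<in> Ls \<and> y \<in> Ls \<and> \<psi> x = \<psi> y) \<longleftrightarrow> (x' \<in> Ls \<and> y' \<in> Ls \<and> \<psi> x' = \<psi> y')" for x y x' y'
    using IE0[of x y x' y'] unfolding cwE .
  have IR: "st Tm P x y = st Tm P x' y' \<Longrightarrow>
      (x \<in> Ls \<and> y \<in> Ls \<and> R (\<psi> x) (\<psi> y)) \<longleftrightarrow> (x' \<in> Ls \<and> y' \<in> Ls \<and> R (\<psi> x') (\<psi> y'))" for x y x' y'
    using IR0[of x y x' y'] unfolding cwR .
  define A where "A = {x \<in> Ls. \<forall>y<x. y \<in> Ls \<longrightarrow> \<psi> y \<noteq> \<psi> x}"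
  have ALs: "A \<subseteq> Ls" by (auto simp: A_def)
  have psi_inj: "inj_on \<psi> A"
  proof (rule inj_onI)
    fix x y assume xy: "x \<in> A" "y \<in> A" "\<psi> x = \<psi> y"
    show "x = y"
    proof (rule ccontr)
      assume "x \<noteq> y"
      then consider "x < y" | "y < x" by linarith
      then show False
      proof cases
        case 1 then show False using xy unfolding A_def by auto
      next
        case 2 then show False using xy unfolding A_def by auto
      qed
    qed
  qed
  have psi_img: "\<psi> ` A = X"
  proof
    show "\<psi> ` A \<subseteq> X" using L(2) by (auto simp: A_def Ls_def \<psi>_def)
    show "X \<subseteq> \<psi> ` A"
    proof
      fix z assume "z \<in> X"
      then obtain u where u: "u \<in> L" "\<phi> u = z" using L(2) by blast
      then have ex: "length u \<in> Ls \<and> \<psi> (length u) = z"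
        unfolding Ls_def \<psi>_def using unit_list_rep[of u] by simp
      define x where "x = (LEAST x. x \<in> Ls \<and> \<psi> x = z)"
      have x: "x \<in> Ls \<and> \<psi> x = z" unfolding x_def by (rule LeastI[of "\<lambda>x. x \<in> Ls \<and> \<psi> x = z", OF ex])
      have "\<forall>y<x. y \<in> Ls \<longrightarrow> \<psi> y \<noteq> \<psi> x"
      proof (intro allI impI notI)
        fix y assume y: "y < x" "y \<in> Ls" "\<psi> y = \<psi> x"
        then have "y \<in> Ls \<and> \<psi> y = z" using x by simp
        then have "x \<le> y" unfolding x_def by (rule Least_le)
        then show False using y(1) by simp
      qed
      then have "x \<in> A" using x by (simp add: A_def)
      then show "z \<in> \<psi> ` A" using x by blast
    qed
  qed
  have BTm: "2 * Tm + P \<le> B" by (simp add: B_def)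
  have perA: "x \<in> A \<longleftrightarrow> x + P \<in> A" if xB: "B \<le> x" for x
  proof
    assume xA: "x \<in> A"
    have axP: "alpha Tm P (x + 1 * P) = alpha Tm P x" by (rule alpha_addP) (use xB TmB in simp)
    have xPL: "x + P \<in> Ls" using IL[of "x + P" x] axP xA ALs by auto
    moreover have "\<not> (y \<in> Ls \<and> \<psi> y = \<psi> (x + P))" if y: "y < x + P" for y
    proof
      assume yy: "y \<in> Ls \<and> \<psi> y = \<psi> (x + P)"
      show False
      proof (cases "Tm + P \<le> y")
        case True
        define y' where "y' = y - P"
        have yy': "y = y' + 1 * P" "Tm \<le> y'" "y' < x" using True y unfolding y'_def by auto
        have "st Tm P y (x + P) = st Tm P y' x"
          using st_shift[of Tm y' x P 1] yy' xB TmB by simp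
        then have "y' \<in> Ls \<and> \<psi> y' = \<psi> x" using IE[of y "x + P" y' x] yy xPL by blast
        then show False using xA yy'(3) by (auto simp: A_def)
      next
        case False
        have yx: "y < x" using False xB BTm by linarith
        have "st Tm P y (x + 1 * P) = st Tm P y (x + 0 * P)"
          by (rule st_farm) (use False xB BTm TmB in auto)
        then have "st Tm P y (x + P) = st Tm P y x" by simp
        then have "y \<in> Ls \<and> \<psi> y = \<psi> x" using IE[of y "x + P" y x] yy xPL by blast
        then show False using xA yx by (auto simp: A_def)
      qed
    qed
    ultimately show "x + P \<in> A" by (auto simp: A_def)
  next
    assume xA: "x + P \<in> A"
    have axP: "alpha Tm P (x + 1 * P) = alpha Tm P x" by (rule alpha_addP) (use xB TmB in simp)
    have xL: "x \<in> Ls" using IL[of "x + P" x] axP xA ALs by auto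
    moreover have "\<not> (y \<in> Ls \<and> \<psi> y = \<psi> x)" if y: "y < x" for y
    proof
      assume yy: "y \<in> Ls \<and> \<psi> y = \<psi> x"
      show False
      proof (cases "Tm \<le> y")
        case True
        have "st Tm P (y + 1 * P) (x + 1 * P) = st Tm P y x"
          by (rule st_shift) (use True xB TmB in auto)
        then have "y + P \<in> Ls \<and> \<psi> (y + P) = \<psi> (x + P)" using IE[of "y + P" "x + P" y x] yy xL by simp
        then show False using xA y by (auto simp: A_def)
      next
        case False
        have "st Tm P y (x + 1 * P) = st Tm P y (x + 0 * P)"
          by (rule st_farm) (use False xB BTm TmB in auto)
        then have "st Tm P y (x + P) = st Tm P y x" by simp
        then have "y \<in> Ls \<and> \<psi> y = \<psi> (x + P)" using IE[of y "x + P" y x] yy xL by blast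
        then show False using xA y by (auto simp: A_def)
      qed
    qed
    ultimately show "x \<in> A" by (auto simp: A_def)
  qed
  have perAk: "x \<in> A \<longleftrightarrow> x + k * P \<in> A" if "B \<le> x" for x k
  proof (induction k)
    case 0 then show ?case by simp
  next
    case (Suc k)
    have "x + Suc k * P = (x + k * P) + P" by simp
    moreover have "B \<le> x + k * P" using that by simp
    ultimately show ?case using Suc perA by metis
  qed
  have finR: "finite {r. r < P \<and> B + r \<in> A}" by (rule finite_subset[of _ "{..<P}"]) auto
  obtain rs where rs: "set rs = {r. r < P \<and> B + r \<in> A}" "distinct rs"
    using finite_distinct_list[OF finR] by blast
  define n where "n = length rs"
  define pp where "pp = (\<lambda>k i. sd B P (rs ! k) i)"
  have rsk: "rs ! k < P" "B + rs ! k \<in> A" if "k < n" for k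
    using nth_mem[of k rs] that rs(1) unfolding n_def by auto
  have ppA: "pp k i \<in> A" if "k < n" "1 \<le> i" for k i
  proof -
    have "pp k i = (B + rs ! k) + (i - 1) * P" by (simp add: pp_def sd_def)
    then show ?thesis using perAk[of "B + rs ! k" "i - 1"] rsk[OF that(1)] by simp
  qed
  have ppB: "B \<le> pp k i" for k i by (simp add: pp_def sd_def)
  have pp_dm: "(pp k i - B) mod P = rs ! k" "(pp k i - B) div P = i - 1" if "k < n" for k i
  proof -
    have e: "pp k i - B = rs ! k + (i - 1) * P" by (simp add: pp_def sd_def)
    show "(pp k i - B) mod P = rs ! k" unfolding e using rsk[OF that] by simp
    show "(pp k i - B) div P = i - 1" unfolding e using rsk[OF that] P0 by simp
  qed
  have pp_inj: "k = l \<and> i = j" if "k < n" "l < n" "1 \<le> i" "1 \<le> j" "pp k i = pp l j" for k l i j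
  proof -
    have "rs ! k = rs ! l" using pp_dm(1)[OF that(1), of i] pp_dm(1)[OF that(2), of j] that(5) by simp
    then have "k = l" using rs(2) that(1,2) by (simp add: n_def nth_eq_iff_index_eq)
    moreover have "i - 1 = j - 1" using pp_dm(2)[OF that(1), of i] pp_dm(2)[OF that(2), of j] that(5) by simp
    ultimately show ?thesis using that(3,4) by simp
  qed
  have pp_surj: "\<exists>k<n. \<exists>i. 1 \<le> i \<and> i - 1 = (x - B) div P \<and> pp k i = x" if "x \<in> A" "B \<le> x" for x
  proof -
    define r where "r = (x - B) mod P"
    define t where "t = (x - B) div P"
    have x: "x = (B + r) + t * P" unfolding r_def t_def using that(2) by simp
    have "B + r \<in> A" using perAk[of "B + r" t] x that(1) by simp
    moreover have "r < P" unfolding r_def using P0 by simp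
    ultimately have "r \<in> set rs" using rs(1) by simp
    then obtain k where k: "k < n" "rs ! k = r" by (metis in_set_conv_nth n_def)
    have "pp k (t + 1) = x" unfolding pp_def sd_def k(2) x by simp
    then show ?thesis using k(1) by (intro exI[of _ k] conjI exI[of _ "t + 1"]) (auto simp: t_def)
  qed
  define Q where "Q = {x \<in> A. x < B + 5 * P}"
  have seeds: "seed_elems n pp = {x \<in> A. B \<le> x \<and> x < B + 5 * P}"
  proof
    show "seed_elems n pp \<subseteq> {x \<in> A. B \<le> x \<and> x < B + 5 * P}"
    proof
      fix x assume "x \<in> seed_elems n pp"
      then obtain k i where ki: "x = pp k i" "k < n" "1 \<le> i" "i \<le> 5" by (auto simp: seed_elems_def)
      have "(i - 1) * P \<le> 4 * P" using ki(4) by (intro mult_le_mono1) simp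
      then have "x < B + 5 * P" using rsk(1)[OF ki(2)] unfolding ki(1) pp_def sd_def by linarith
      then show "x \<in> {x \<in> A. B \<le> x \<and> x < B + 5 * P}" using ppA[OF ki(2,3)] ppB ki(1) by simp
    qed
    show "{x \<in> A. B \<le> x \<and> x < B + 5 * P} \<subseteq> seed_elems n pp"
    proof
      fix x assume x: "x \<in> {x \<in> A. B \<le> x \<and> x < B + 5 * P}"
      then obtain k i where ki: "k < n" "1 \<le> i" "i - 1 = (x - B) div P" "pp k i = x" using pp_surj by blast
      have "x - B < 5 * P" using x by auto
      then have "(x - B) div P < 5" using P0 by (simp add: div_less_iff_less_mult)
      then have "i \<le> 5" using ki(3) by simp
      then show "x \<in> seed_elems n pp" using ki unfolding seed_elems_def by blast
    qed
  qed
  have Qs: "Q - seed_elems n pp = {x \<in> A. x < B}"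
    unfolding seeds Q_def using BTm by auto
  define \<rho> where "\<rho> = (\<lambda>x y. R (\<psi> x) (\<psi> y))"
  have \<rho>I: "\<rho> x y = \<rho> x' y'" if "x \<in> A" "y \<in> A" "x' \<in> A" "y' \<in> A" "st Tm P x y = st Tm P x' y'"
    for x y x' y'
    using IR[OF that(5)] that(1-4) ALs unfolding \<rho>_def by auto
  have TmP': "Tm \<le> P" using TmP by simp
  have \<rho>I': "\<rho> x y = \<rho> x' y'" if "st Tm P x y = st Tm P x' y'" "x \<in> A" "y \<in> A" "x' \<in> A" "y' \<in> A"
    for x y x' y' using \<rho>I that by blast
  have k0: "\<rho> (pp k i) (pp l i) = \<rho> (pp k 1) (pp l 1)" if "k < n" "l < n" "1 \<le> i" for k l i
  proof -
    have "st Tm P (pp k i) (pp l i) = st Tm P (pp k 1) (pp l 1)"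
      unfolding pp_def by (rule C0[OF TmP' TmB that(3)])
    then show ?thesis by (rule \<rho>I') (use that ppA in auto)
  qed
  have k1: "\<rho> (pp k i) (pp l (i + 1)) = \<rho> (pp k 1) (pp l 2)" if "k < n" "l < n" "1 \<le> i" for k l i
  proof -
    have "st Tm P (pp k i) (pp l (i + 1)) = st Tm P (pp k 1) (pp l 2)"
      unfolding pp_def by (rule C1[OF TmP' TmB that(3)])
    then show ?thesis by (rule \<rho>I') (use that ppA in auto)
  qed
  have km1: "\<rho> (pp k (i + 1)) (pp l i) = \<rho> (pp k 2) (pp l 1)" if "k < n" "l < n" "1 \<le> i" for k l i
  proof -
    have "st Tm P (pp k (i + 1)) (pp l i) = st Tm P (pp k 2) (pp l 1)"
      unfolding pp_def by (rule Cm1[OF TmP' TmB that(3)])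
    then show ?thesis by (rule \<rho>I') (use that ppA in auto)
  qed
  have k2: "\<rho> (pp k i) (pp l j) = \<rho> (pp k 1) (pp l 3)" if "k < n" "l < n" "1 \<le> i" "i + 2 \<le> j" for k l i j
  proof -
    have "st Tm P (pp k i) (pp l j) = st Tm P (pp k 1) (pp l 3)"
      unfolding pp_def by (rule C2[OF TmP' TmB that(3) that(4) rsk(1)[OF that(1)]])
    then show ?thesis by (rule \<rho>I') (use that ppA in auto)
  qed
  have km2: "\<rho> (pp k i) (pp l j) = \<rho> (pp k 3) (pp l 1)" if "k < n" "l < n" "1 \<le> j" "j + 2 \<le> i" for k l i j
  proof -
    have "st Tm P (pp k i) (pp l j) = st Tm P (pp k 3) (pp l 1)"
      unfolding pp_def by (rule Cm2[OF TmP' TmB that(3) that(4) rsk(1)[OF that(2)]])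
    then show ?thesis by (rule \<rho>I') (use that ppA in auto)
  qed
  have kq: "\<rho> q (pp k i) = \<rho> q (pp k 2)" if "k < n" "q \<in> A" "q < B" "2 \<le> i" for k q i
  proof -
    have "st Tm P q (pp k i) = st Tm P q (pp k 2)"
      unfolding pp_def by (rule CQ[OF TmP' TmB that(4) that(3)])
    then show ?thesis by (rule \<rho>I') (use that ppA in auto)
  qed
  have kq': "\<rho> (pp k i) q = \<rho> (pp k 2) q" if "k < n" "q \<in> A" "q < B" "2 \<le> i" for k q i
  proof -
    have "st Tm P (pp k i) q = st Tm P (pp k 2) q"
      unfolding pp_def by (rule CQ'[OF TmP' TmB that(4) that(3)])
    then show ?thesis by (rule \<rho>I') (use that ppA in auto)
  qed
  have QA: "Q \<subseteq> A" by (auto simp: Q_def)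
  have inj_pp: "inj_on (\<lambda>(k, i). pp k i) {(k, i). k < n \<and> 1 \<le> i \<and> i \<le> 5}"
  proof (rule inj_onI)
    fix a b assume ab: "a \<in> {(k, i). k < n \<and> 1 \<le> i \<and> i \<le> 5}" "b \<in> {(k, i). k < n \<and> 1 \<le> i \<and> i \<le> 5}"
      "(\<lambda>(k, i). pp k i) a = (\<lambda>(k, i). pp k i) b"
    obtain k i where a: "a = (k, i)" by fastforce
    obtain l j where b: "b = (l, j)" by fastforce
    have "k < n" "1 \<le> i" "l < n" "1 \<le> j" "pp k i = pp l j" using ab unfolding a b by auto
    then show "a = b" using pp_inj unfolding a b by blast
  qed
  have c1: "\<forall>i\<in>{1..5}. \<forall>j\<in>{1..5}. \<rho> (pp k i) (pp l i) = \<rho> (pp k j) (pp l j)" if kl: "k < n" "l < n" for k l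
  proof (intro ballI)
    fix i j :: nat assume "i \<in> {1..5}" "j \<in> {1..5}"
    then show "\<rho> (pp k i) (pp l i) = \<rho> (pp k j) (pp l j)" using k0[OF kl, of i] k0[OF kl, of j] by simp
  qed
  have c2: "\<forall>i\<in>{1..4}. \<forall>j\<in>{1..4}. \<rho> (pp k i) (pp l (i + 1)) = \<rho> (pp k j) (pp l (j + 1))" if kl: "k < n" "l < n" for k l
  proof (intro ballI)
    fix i j :: nat assume "i \<in> {1..4}" "j \<in> {1..4}"
    then show "\<rho> (pp k i) (pp l (i + 1)) = \<rho> (pp k j) (pp l (j + 1))" using k1[OF kl, of i] k1[OF kl, of j] by simp
  qed
  have c3: "\<forall>i\<in>{1..4}. \<forall>j\<in>{1..4}. \<rho> (pp k (i + 1)) (pp l i) = \<rho> (pp k (j + 1)) (pp l j)" if kl: "k < n" "l < n" for k l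
  proof (intro ballI)
    fix i j :: nat assume "i \<in> {1..4}" "j \<in> {1..4}"
    then show "\<rho> (pp k (i + 1)) (pp l i) = \<rho> (pp k (j + 1)) (pp l j)" using km1[OF kl, of i] km1[OF kl, of j] by simp
  qed
  have c4: "\<forall>i\<in>{1..5}. \<forall>j\<in>{1..5}. \<forall>i'\<in>{1..5}. \<forall>j'\<in>{1..5}.
           i + 2 \<le> j \<longrightarrow> i' + 2 \<le> j' \<longrightarrow> \<rho> (pp k i) (pp l j) = \<rho> (pp k i') (pp l j')" if kl: "k < n" "l < n" for k l
  proof (intro ballI impI)
    fix i j i' j' :: nat assume "i \<in> {1..5}" "j \<in> {1..5}" "i' \<in> {1..5}" "j' \<in> {1..5}" "i + 2 \<le> j" "i' + 2 \<le> j'"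
    then show "\<rho> (pp k i) (pp l j) = \<rho> (pp k i') (pp l j')" using k2[OF kl, of i j] k2[OF kl, of i' j'] by simp
  qed
  have c5: "\<forall>i\<in>{1..5}. \<forall>j\<in>{1..5}. \<forall>i'\<in>{1..5}. \<forall>j'\<in>{1..5}.
           i + 2 \<le> j \<longrightarrow> i' + 2 \<le> j' \<longrightarrow> \<rho> (pp k j) (pp l i) = \<rho> (pp k j') (pp l i')" if kl: "k < n" "l < n" for k l
  proof (intro ballI impI)
    fix i j i' j' :: nat assume "i \<in> {1..5}" "j \<in> {1..5}" "i' \<in> {1..5}" "j' \<in> {1..5}" "i + 2 \<le> j" "i' + 2 \<le> j'"
    then show "\<rho> (pp k j) (pp l i) = \<rho> (pp k j') (pp l i')" using km2[OF kl, of i j] km2[OF kl, of i' j'] by simp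
  qed
  have c6: "\<forall>i\<in>{2..5}. \<forall>j\<in>{2..5}. \<rho> q (pp k i) = \<rho> q (pp k j)"
    and c7: "\<forall>i\<in>{2..5}. \<forall>j\<in>{2..5}. \<rho> (pp k i) q = \<rho> (pp k j) q"
    if k: "k < n" and q: "q \<in> Q - seed_elems n pp" for k q
  proof -
    have qA: "q \<in> A" "q < B" using q unfolding Qs by auto
    show "\<forall>i\<in>{2..5}. \<forall>j\<in>{2..5}. \<rho> q (pp k i) = \<rho> q (pp k j)"
    proof (intro ballI)
      fix i j :: nat assume "i \<in> {2..5}" "j \<in> {2..5}"
      then show "\<rho> q (pp k i) = \<rho> q (pp k j)" using kq[OF k qA, of i] kq[OF k qA, of j] by simp
    qed
    show "\<forall>i\<in>{2..5}. \<forall>j\<in>{2..5}. \<rho> (pp k i) q = \<rho> (pp k j) q"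
    proof (intro ballI)
      fix i j :: nat assume "i \<in> {2..5}" "j \<in> {2..5}"
      then show "\<rho> (pp k i) q = \<rho> (pp k j) q" using kq'[OF k qA, of i] kq'[OF k qA, of j] by simp
    qed
  qed
  have finQ: "finite Q" by (rule finite_subset[of _ "{..<B + 5 * P}"]) (auto simp: Q_def)
  have seedQ: "seed_elems n pp \<subseteq> Q" unfolding seeds Q_def by auto
  have found: "unary_FA_foundational Q \<rho> n pp"
    unfolding unary_FA_foundational_def
    apply (rule conjI[OF finQ])
    apply (rule conjI[OF seedQ])
    apply (rule conjI[OF inj_pp])
    apply (rule conjI)
     apply (intro allI impI)
    subgoal for k l
      apply (insert c1[of k l] c2[of k l] c3[of k l] c4[of k l] c5[of k l])
      apply (intro conjI)
          apply assumption+
      done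
    apply (intro allI impI ballI)
    subgoal for k q
      apply (insert c6[of k q] c7[of k q])
      apply (intro conjI)
       apply assumption+
      done
    done
  have tourQ: "tournament Q \<rho>"
  proof -
    have psiX: "\<psi> x \<in> X" if "x \<in> Q" for x using that QA psi_img by blast
    have "\<psi> x \<noteq> \<psi> y" if "x \<in> Q" "y \<in> Q" "x \<noteq> y" for x y
      using that QA psi_inj by (meson inj_onD subsetD)
    then show ?thesis using tour psiX unfolding tournament_def \<rho>_def by blast
  qed
  define C where "C = propagate_carrier Q n pp"
  have Cdef: "C = Inl ` {x \<in> A. x < B} \<union> {Inr (k, i) | k i. k < n \<and> 1 \<le> i}"
    unfolding C_def propagate_carrier_def Qs ..
  define e where "e = (\<lambda>c. case c of Inl q \<Rightarrow> q | Inr (k, i) \<Rightarrow> pp k i)"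
  have e_bij: "bij_betw e C A"
    unfolding bij_betw_def
  proof
    show "inj_on e C"
    proof (rule inj_onI)
      fix a b assume ab: "a \<in> C" "b \<in> C" "e a = e b"
      show "a = b"
        using ab ppB pp_inj unfolding Cdef e_def by (auto, (metis not_le)+)
    qed
    show "e ` C = A"
    proof
      show "e ` C \<subseteq> A" unfolding Cdef e_def using ppA by auto
      show "A \<subseteq> e ` C"
      proof
        fix x assume xA: "x \<in> A"
        show "x \<in> e ` C"
        proof (cases "x < B")
          case True
          then have "Inl x \<in> C" "e (Inl x) = x" using xA by (auto simp: Cdef e_def)
          then show ?thesis by (metis image_eqI)
        next
          case False
          then obtain k i where "k < n" "1 \<le> i" "pp k i = x" using pp_surj[OF xA] by auto
          then have "Inr (k, i) \<in> C" "e (Inr (k, i)) = x" by (auto simp: Cdef e_def)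
          then show ?thesis by (metis image_eqI)
        qed
      qed
    qed
  qed
  have psi_bij: "bij_betw \<psi> A X" unfolding bij_betw_def using psi_inj psi_img by simp
  have rel: "propagate_rel \<rho> pp a b \<longleftrightarrow> R (\<psi> (e a)) (\<psi> (e b))" if ab: "a \<in> C" "b \<in> C" for a b
  proof -
    have "propagate_rel \<rho> pp a b \<longleftrightarrow> \<rho> (e a) (e b)"
    proof (cases a)
      case (Inl q)
      then have q: "q \<in> A" "q < B" using ab(1) by (auto simp: Cdef)
      show ?thesis
      proof (cases b)
        case (Inl q') then show ?thesis using \<open>a = Inl q\<close> by (simp add: e_def)
      next
        case (Inr b')
        then obtain l j where b: "b = Inr (l, j)" "l < n" "1 \<le> j" using ab(2) by (auto simp: Cdef)
        show ?thesis
        proof (cases "j = 1")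
          case True then show ?thesis using \<open>a = Inl q\<close> b by (simp add: e_def)
        next
          case False
          then show ?thesis using \<open>a = Inl q\<close> b kq[OF b(2) q, of j] by (simp add: e_def)
        qed
      qed
    next
      case (Inr a')
      then obtain k i where a: "a = Inr (k, i)" "k < n" "1 \<le> i" using ab(1) by (auto simp: Cdef)
      show ?thesis
      proof (cases b)
        case (Inl q)
        then have q: "q \<in> A" "q < B" using ab(2) by (auto simp: Cdef)
        show ?thesis
        proof (cases "i = 1")
          case True then show ?thesis using \<open>b = Inl q\<close> a by (simp add: e_def)
        next
          case False
          then show ?thesis using \<open>b = Inl q\<close> a kq'[OF a(2) q, of i] by (simp add: e_def)
        qed
      next
        case (Inr b')
        then obtain l j where b: "b = Inr (l, j)" "l < n" "1 \<le> j" using ab(2) by (auto simp: Cdef)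
        have ee: "e a = pp k i" "e b = pp l j" using a b by (simp_all add: e_def)
        consider "j = i" | "j = i + 1" | "i = j + 1" | "i + 2 \<le> j" | "j + 2 \<le> i" by linarith
        then show ?thesis
        proof cases
          case 1 then show ?thesis unfolding ee a(1) b(1) using k0[OF a(2) b(2) a(3)] by (simp add: e_def)
        next
          case 2 then show ?thesis unfolding ee a(1) b(1) using k1[OF a(2) b(2) a(3)] by (simp add: e_def)
        next
          case 3 then show ?thesis unfolding ee a(1) b(1) using km1[OF a(2) b(2) b(3)] by (simp add: e_def)
        next
          case 4 then show ?thesis unfolding ee a(1) b(1) using k2[OF a(2) b(2) a(3) 4] by (simp add: e_def)
        next
          case 5 then show ?thesis unfolding ee a(1) b(1) using km2[OF a(2) b(2) b(3) 5] by (simp add: e_def)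
        qed
      qed
    qed
    then show ?thesis by (simp add: \<rho>_def)
  qed
  have "isomorphic X R C (propagate_rel \<rho> pp)"
    by (rule iso_from[OF e_bij psi_bij]) (use rel in blast)
  then show ?thesis using found tourQ unfolding C_def by blast
qed


theorem theorem5p12:
  fixes X :: "'a set" and R :: "'a \<Rightarrow> 'a \<Rightarrow> bool"
  assumes "tournament X R"
  shows "unary_FA_presentable X R \<longleftrightarrow>
    (\<exists>(Q :: nat set) (\<rho> :: nat \<Rightarrow> nat \<Rightarrow> bool) (n :: nat) (p :: nat \<Rightarrow> nat \<Rightarrow> nat).
        unary_FA_foundational Q \<rho> n p \<and> tournament Q \<rho> \<and>
        isomorphic X R (propagate_carrier Q n p) (propagate_rel \<rho> p))"
proof
  assume "unary_FA_presentable X R"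
  then show "\<exists>(Q :: nat set) (\<rho> :: nat \<Rightarrow> nat \<Rightarrow> bool) (n :: nat) (p :: nat \<Rightarrow> nat \<Rightarrow> nat).
        unary_FA_foundational Q \<rho> n p \<and> tournament Q \<rho> \<and>
        isomorphic X R (propagate_carrier Q n p) (propagate_rel \<rho> p)"
    using forward[OF assms] by blast
next
  assume "\<exists>(Q :: nat set) (\<rho> :: nat \<Rightarrow> nat \<Rightarrow> bool) (n :: nat) (p :: nat \<Rightarrow> nat \<Rightarrow> nat).
        unary_FA_foundational Q \<rho> n p \<and> tournament Q \<rho> \<and>
        isomorphic X R (propagate_carrier Q n p) (propagate_rel \<rho> p)"
  then obtain Q :: "nat set" and \<rho> n p where "unary_FA_foundational Q \<rho> n p"
      "isomorphic X R (propagate_carrier Q n p) (propagate_rel \<rho> p)" by blast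
  then show "unary_FA_presentable X R" by (rule backward)
qed

end
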